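(* Consider a mean-variance team stochastic game as described in the context and let $\tilde{\boldsymbol{\mu}}\in\mathcal{U}$ be a first-order stationary point. For $\mu_i\in\mathcal{U}_i$ write $\delta_{\tilde\mu_i}^{\mu_i}=(1-\delta)\tilde\mu_i+\delta\mu_i$ and $D_i(\mu_i)=\frac{\mathrm{d}}{\mathrm{d}\delta}J(\delta_{\tilde\mu_i}^{\mu_i},\tilde{\boldsymbol{\mu}}_{-i})\big|_{\delta=0}$. (1) If $D_i(\mu_i)<0$ for every agent $i\in\mathcal{N}$ and every $\mu_i\in\mathcal{U}_i$ with $\mu_i\neq\tilde\mu_i$, then $\tilde{\boldsymbol{\mu}}$ is a strict local Nash equilibrium. (2) If there exist agents $i$ and policies $\mu_i'\in\mathcal{U}_i$ with $D_i(\mu'_i)=0$, then $\tilde{\boldsymbol{\mu}}$ is a local Nash equilibrium if and only if for every such agent $i$ and such $\mu_i'$ there exists $\bar\delta\in(0,1]$ such that for all $\delta\in(0,\bar\delta]$, $\eta(\delta_{\tilde\mu_i}^{\mu_i'},\tilde{\boldsymbol{\mu}}_{-i})=\eta(\tilde\mu_i,\tilde{\boldsymbol{\mu}}_{-i})$.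
   Context: Game: finite agents $\mathcal{N}=\{1,\dots,N\}$, finite state space $\mathcal{S}$, finite action sets $\mathcal{A}_i$, $\mathcal{A}=\prod_i\mathcal{A}_i$, transition kernel $P(s'|s,\boldsymbol{a})$, common reward $r:\mathcal{S}\times\mathcal{A}\to\mathbb{R}$. Policies $\mu_i:\mathcal{S}\to\Delta(\mathcal{A}_i)$ (set $\mathcal{U}_i$); joint policies $\boldsymbol{\mu}\in\mathcal{U}=\prod_i\mathcal{U}_i$ with $\boldsymbol{\mu}(\boldsymbol{a}|s)=\prod_i\mu_i(a_i|s)$; $(\mu_i,\boldsymbol{\mu}_{-i})$ means agent $i$ uses $\mu_i$, others use $\boldsymbol{\mu}_{-i}$; $(1-\delta)\tilde\mu_i+\delta\mu_i$ is the policy $s\mapsto(1-\delta)\tilde\mu_i(\cdot|s)+\delta\mu_i(\cdot|s)$. Standing assumption: the chain $P^{\boldsymbol{\mu}}(s'|s)=\sum_{\boldsymbol{a}}\boldsymbol{\mu}(\boldsymbol{a}|s)P(s'|s,\boldsymbol{a})$ is ergodic for every $\boldsymbol{\mu}\in\mathcal{U}$, with stationary distribution $\pi^{\boldsymbol{\mu}}$. $\eta(\boldsymbol{\mu})=\eta^{\boldsymbol{\mu}}=\sum_s\pi^{\boldsymbol{\mu}}(s)\sum_{\boldsymbol{a}}\boldsymbol{\mu}(\boldsymbol{a}|s)r(s,\boldsymbol{a})$ (long-run average reward); $\zeta^{\boldsymbol{\mu}}=\sum_s\pi^{\boldsymbol{\mu}}(s)\sum_{\boldsymbol{a}}\boldsymbol{\mu}(\boldsymbol{a}|s)(r(s,\boldsymbol{a})-\eta^{\boldsymbol{\mu}})^2$;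 for fixed $\beta\ge0$, $J(\boldsymbol{\mu})=\eta^{\boldsymbol{\mu}}-\beta\zeta^{\boldsymbol{\mu}}$. Derivatives at $\delta=0$ are right derivatives. A joint policy $\tilde{\boldsymbol{\mu}}$ is a first-order stationary point if $\frac{\mathrm{d}}{\mathrm{d}\delta}J((1-\delta)\tilde\mu_i+\delta\mu_i,\tilde{\boldsymbol{\mu}}_{-i})|_{\delta=0}\le0$ for all $i\in\mathcal{N}$, $\mu_i\in\mathcal{U}_i$. A joint policy $\boldsymbol{\mu}^*$ is a local Nash equilibrium if there is $\bar\delta\in(0,1]$ such that for all $\delta\in(0,\bar\delta]$, all $i\in\mathcal{N}$ and all $\mu_i\in\mathcal{U}_i$: $J(\mu_i^*,\boldsymbol{\mu}^*_{-i})\ge J((1-\delta)\mu_i^*+\delta\mu_i,\boldsymbol{\mu}^*_{-i})$; it is a strict local Nash equilibrium if the inequality is strict for all $\mu_i\neq\mu_i^*$. *)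

theory Defs
  imports "HOL-Analysis.Analysis"
begin

text \<open>Agents: finite type 'i; states: finite type 's; actions of agent i: the nonempty set A i
  of the finite type 'a.
  P s a s' is the transition probability, r s a the common reward.\<close>

definition joint_acts :: "('i \<Rightarrow> 'a set) \<Rightarrow> ('i \<Rightarrow> 'a) set" where
  "joint_acts A = Pi\<^sub>E UNIV A"

definition is_policy :: "'a set \<Rightarrow> ('s \<Rightarrow> 'a \<Rightarrow> real) \<Rightarrow> bool" where
  "is_policy Ai m \<longleftrightarrow> (\<forall>s. (\<forall>a. 0 \<le> m s a) \<and> (\<forall>a. a \<notin> Ai \<longrightarrow> m s a = 0)
                            \<and> (\<Sum>a\<in>Ai. m s a) = 1)"

definition is_joint_policy :: "('i \<Rightarrow> 'a set) \<Rightarrow> ('i \<Rightarrow> 's \<Rightarrow> 'a \<Rightarrow> real) \<Rightarrow> bool" where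
  "is_joint_policy A mu \<longleftrightarrow> (\<forall>i. is_policy (A i) (mu i))"

definition jprob :: "('i::finite \<Rightarrow> 's \<Rightarrow> 'a \<Rightarrow> real) \<Rightarrow> 's \<Rightarrow> ('i \<Rightarrow> 'a) \<Rightarrow> real" where
  "jprob mu s a = (\<Prod>i\<in>UNIV. mu i s (a i))"

definition mixp :: "real \<Rightarrow> ('s \<Rightarrow> 'a \<Rightarrow> real) \<Rightarrow> ('s \<Rightarrow> 'a \<Rightarrow> real) \<Rightarrow> 's \<Rightarrow> 'a \<Rightarrow> real" where
  "mixp d m1 m2 = (\<lambda>s a. (1 - d) * m1 s a + d * m2 s a)"

definition chain :: "('i::finite \<Rightarrow> 'a set) \<Rightarrow> ('s \<Rightarrow> ('i \<Rightarrow> 'a) \<Rightarrow> 's \<Rightarrow> real)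
     \<Rightarrow> ('i \<Rightarrow> 's \<Rightarrow> 'a \<Rightarrow> real) \<Rightarrow> 's \<Rightarrow> 's \<Rightarrow> real" where
  "chain A P mu s s' = (\<Sum>a\<in>joint_acts A. jprob mu s a * P s a s')"

fun nstep :: "('s::finite \<Rightarrow> 's \<Rightarrow> real) \<Rightarrow> nat \<Rightarrow> 's \<Rightarrow> 's \<Rightarrow> real" where
  "nstep Q 0 s s' = (if s = s' then 1 else 0)"
| "nstep Q (Suc n) s s' = (\<Sum>t\<in>UNIV. nstep Q n s t * Q t s')"

text \<open>Ergodic finite chain: irreducible and aperiodic, i.e. some power has all entries positive.\<close>
definition ergodic :: "('s::finite \<Rightarrow> 's \<Rightarrow> real) \<Rightarrow> bool" where
  "ergodic Q \<longleftrightarrow> (\<exists>n. \<forall>s s'. 0 < nstep Q n s s')"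

definition is_stationary_dist :: "('s::finite \<Rightarrow> 's \<Rightarrow> real) \<Rightarrow> ('s \<Rightarrow> real) \<Rightarrow> bool" where
  "is_stationary_dist Q p \<longleftrightarrow> (\<forall>s. 0 \<le> p s) \<and> (\<Sum>s\<in>UNIV. p s) = 1
      \<and> (\<forall>s'. (\<Sum>s\<in>UNIV. p s * Q s s') = p s')"

text \<open>The stationary distribution pi^mu (unique under ergodicity).\<close>
definition stat_dist :: "('i::finite \<Rightarrow> 'a set) \<Rightarrow> ('s::finite \<Rightarrow> ('i \<Rightarrow> 'a) \<Rightarrow> 's \<Rightarrow> real)
     \<Rightarrow> ('i \<Rightarrow> 's \<Rightarrow> 'a \<Rightarrow> real) \<Rightarrow> 's \<Rightarrow> real" where
  "stat_dist A P mu = (THE p. is_stationary_dist (chain A P mu) p)"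

definition eta :: "('i::finite \<Rightarrow> 'a set) \<Rightarrow> ('s::finite \<Rightarrow> ('i \<Rightarrow> 'a) \<Rightarrow> 's \<Rightarrow> real)
     \<Rightarrow> ('s \<Rightarrow> ('i \<Rightarrow> 'a) \<Rightarrow> real) \<Rightarrow> ('i \<Rightarrow> 's \<Rightarrow> 'a \<Rightarrow> real) \<Rightarrow> real" where
  "eta A P r mu = (\<Sum>s\<in>UNIV. stat_dist A P mu s * (\<Sum>a\<in>joint_acts A. jprob mu s a * r s a))"

definition zeta :: "('i::finite \<Rightarrow> 'a set) \<Rightarrow> ('s::finite \<Rightarrow> ('i \<Rightarrow> 'a) \<Rightarrow> 's \<Rightarrow> real)
     \<Rightarrow> ('s \<Rightarrow> ('i \<Rightarrow> 'a) \<Rightarrow> real) \<Rightarrow> ('i \<Rightarrow> 's \<Rightarrow> 'a \<Rightarrow> real) \<Rightarrow> real" where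
  "zeta A P r mu = (\<Sum>s\<in>UNIV. stat_dist A P mu s *
      (\<Sum>a\<in>joint_acts A. jprob mu s a * (r s a - eta A P r mu)\<^sup>2))"

definition MVJ :: "('i::finite \<Rightarrow> 'a set) \<Rightarrow> ('s::finite \<Rightarrow> ('i \<Rightarrow> 'a) \<Rightarrow> 's \<Rightarrow> real)
     \<Rightarrow> ('s \<Rightarrow> ('i \<Rightarrow> 'a) \<Rightarrow> real) \<Rightarrow> real \<Rightarrow> ('i \<Rightarrow> 's \<Rightarrow> 'a \<Rightarrow> real) \<Rightarrow> real" where
  "MVJ A P r \<beta> mu = eta A P r mu - \<beta> * zeta A P r mu"

definition rderiv0 :: "(real \<Rightarrow> real) \<Rightarrow> real" where
  "rderiv0 f = Lim (at_right 0) (\<lambda>d. (f d - f 0) / d)"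

definition Dir :: "('i::finite \<Rightarrow> 'a set) \<Rightarrow> ('s::finite \<Rightarrow> ('i \<Rightarrow> 'a) \<Rightarrow> 's \<Rightarrow> real)
     \<Rightarrow> ('s \<Rightarrow> ('i \<Rightarrow> 'a) \<Rightarrow> real) \<Rightarrow> real \<Rightarrow> ('i \<Rightarrow> 's \<Rightarrow> 'a \<Rightarrow> real)
     \<Rightarrow> 'i \<Rightarrow> ('s \<Rightarrow> 'a \<Rightarrow> real) \<Rightarrow> real" where
  "Dir A P r \<beta> mu i m = rderiv0 (\<lambda>d. MVJ A P r \<beta> (mu(i := mixp d (mu i) m)))"

definition first_order_stationary where
  "first_order_stationary A P r \<beta> mu \<longleftrightarrow>
     (\<forall>i m. is_policy (A i) m \<longrightarrow> Dir A P r \<beta> mu i m \<le> 0)"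

definition local_NE where
  "local_NE A P r \<beta> mu \<longleftrightarrow>
     (\<exists>db. 0 < db \<and> db \<le> 1 \<and> (\<forall>d. 0 < d \<and> d \<le> db \<longrightarrow> (\<forall>i m. is_policy (A i) m \<longrightarrow>
        MVJ A P r \<beta> mu \<ge> MVJ A P r \<beta> (mu(i := mixp d (mu i) m)))))"

definition strict_local_NE where
  "strict_local_NE A P r \<beta> mu \<longleftrightarrow>
     (\<exists>db. 0 < db \<and> db \<le> 1 \<and> (\<forall>d. 0 < d \<and> d \<le> db \<longrightarrow> (\<forall>i m. is_policy (A i) m \<longrightarrow>
        MVJ A P r \<beta> mu \<ge> MVJ A P r \<beta> (mu(i := mixp d (mu i) m))
        \<and> (m \<noteq> mu i \<longrightarrow> MVJ A P r \<beta> mu > MVJ A P r \<beta> (mu(i := mixp d (mu i) m))))))"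

end

theory Submission
  imports Defs
begin

definition stoch :: "('s::finite \<Rightarrow> 's \<Rightarrow> real) \<Rightarrow> bool" where
  "stoch Q \<longleftrightarrow> (\<forall>s t. 0 \<le> Q s t) \<and> (\<forall>s. (\<Sum>t\<in>UNIV. Q s t) = 1)"

lemma nstep_nonneg: "stoch Q \<Longrightarrow> 0 \<le> nstep Q n s t"
proof (induction n arbitrary: t)
  case 0 then show ?case by simp
next
  case (Suc n) 
  have "0 \<le> (\<Sum>u\<in>UNIV. nstep Q n s u * Q u t)"
    apply (rule sum_nonneg)
    using Suc by (simp add: stoch_def)
  then show ?case by simp
qed
lemma nstep_rowsum: "stoch Q \<Longrightarrow> (\<Sum>t\<in>UNIV. nstep Q n s t) = 1"
proof (induction n)
  case 0 
  have "(\<Sum>t\<in>UNIV. nstep Q 0 s t) = (\<Sum>t\<in>UNIV. if s = t then 1 else 0)" by simp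
  also have "\<dots> = 1" by simp
  finally show ?case .
next
  case (Suc n)
  have "(\<Sum>t\<in>UNIV. nstep Q (Suc n) s t) = (\<Sum>t\<in>UNIV. \<Sum>u\<in>UNIV. nstep Q n s u * Q u t)"
    by simp
  also have "\<dots> = (\<Sum>u\<in>UNIV. \<Sum>t\<in>UNIV. nstep Q n s u * Q u t)"
    by (rule sum.swap)
  also have "\<dots> = (\<Sum>u\<in>UNIV. nstep Q n s u * (\<Sum>t\<in>UNIV. Q u t))"
    by (simp add: sum_distrib_left)
  also have "\<dots> = 1" using Suc by (simp add: stoch_def)
  finally show ?case .
qed

lemma nstep_left_fix:
  assumes "\<forall>t. (\<Sum>s\<in>UNIV. p s * Q s t) = p t"
  shows "(\<Sum>s\<in>UNIV. p s * nstep Q n s t) = p t"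
proof (induction n arbitrary: t)
  case 0 then show ?case by (simp add: if_distrib cong: if_cong)
next
  case (Suc n)
  have "(\<Sum>s\<in>UNIV. p s * nstep Q (Suc n) s t) = (\<Sum>s\<in>UNIV. \<Sum>u\<in>UNIV. p s * nstep Q n s u * Q u t)"
    by (simp add: sum_distrib_left mult.assoc)
  also have "\<dots> = (\<Sum>u\<in>UNIV. \<Sum>s\<in>UNIV. p s * nstep Q n s u * Q u t)"
    by (rule sum.swap)
  also have "\<dots> = (\<Sum>u\<in>UNIV. (\<Sum>s\<in>UNIV. p s * nstep Q n s u) * Q u t)"
    by (simp add: sum_distrib_right)
  also have "\<dots> = p t" using Suc assms by simp
  finally show ?case .
qed

lemma nstep_right_fix:
  assumes "\<forall>s. (\<Sum>t\<in>UNIV. Q s t * h t) = h s"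
  shows "(\<Sum>t\<in>UNIV. nstep Q n s t * h t) = h s"
proof (induction n arbitrary: s)
  case 0
  have "(\<Sum>t\<in>UNIV. (if s = t then 1 else 0) * h t) = (\<Sum>t\<in>UNIV. if s = t then h t else 0)"
    by (rule sum.cong) auto
  then show ?case by simp
next
  case (Suc n)
  have "(\<Sum>t\<in>UNIV. nstep Q (Suc n) s t * h t) = (\<Sum>t\<in>UNIV. \<Sum>u\<in>UNIV. nstep Q n s u * Q u t * h t)"
    by (simp add: sum_distrib_right)
  also have "\<dots> = (\<Sum>u\<in>UNIV. \<Sum>t\<in>UNIV. nstep Q n s u * Q u t * h t)"
    by (rule sum.swap)
  also have "\<dots> = (\<Sum>u\<in>UNIV. nstep Q n s u * (\<Sum>t\<in>UNIV. Q u t * h t))"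
    by (simp add: sum_distrib_left mult.assoc)
  also have "\<dots> = h s" using Suc assms by simp
  finally show ?case .
qed

lemma stat_pos:
  assumes "stoch Q" "ergodic Q" "is_stationary_dist Q p"
  shows "0 < p t"
proof -
  obtain n where n: "\<forall>s s'. 0 < nstep Q n s s'" using assms(2) by (auto simp: ergodic_def)
  have p: "\<forall>s. 0 \<le> p s" "sum p UNIV = 1" "\<forall>t. (\<Sum>s\<in>UNIV. p s * Q s t) = p t"
    using assms(3) by (auto simp: is_stationary_dist_def)
  have "\<exists>s. 0 < p s"
  proof (rule ccontr)
    assume "\<not> ?thesis"
    then have "\<forall>s. p s = 0" using p(1) by (meson not_less order_antisym)
    then show False using p(2) by simp
  qed
  then obtain s where s: "0 < p s" by blast
  have "0 < (\<Sum>s\<in>UNIV. p s * nstep Q n s t)"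
    by (rule sum_pos2[of UNIV s]) (use s n p(1) in \<open>auto intro: mult_nonneg_nonneg less_imp_le\<close>)
  then show ?thesis using nstep_left_fix[OF p(3)] by simp
qed

lemma stat_unique:
  assumes "stoch Q" "ergodic Q" "is_stationary_dist Q p" "is_stationary_dist Q q"
  shows "p = q"
proof -
  obtain n where n: "\<forall>s s'. 0 < nstep Q n s s'" using assms(2) by (auto simp: ergodic_def)
  have pp: "\<And>t. 0 < p t" "\<And>t. 0 < q t" using stat_pos assms by blast+
  define c where "c = Min (range (\<lambda>s. p s / q s))"
  have "c \<in> range (\<lambda>s. p s / q s)" unfolding c_def by (rule Min_in) auto
  then obtain t0 where t0: "c = p t0 / q t0" by auto
  have cle: "c \<le> p s / q s" for s unfolding c_def by (rule Min_le) auto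
  define x where "x s = p s - c * q s" for s
  have xnn: "0 \<le> x s" for s using cle[of s] pp[of s] by (simp add: x_def field_simps)
  have x0: "x t0 = 0" using t0 pp[of t0] by (simp add: x_def)
  have xfix: "\<forall>t. (\<Sum>s\<in>UNIV. x s * Q s t) = x t"
  proof
    fix t
    have "(\<Sum>s\<in>UNIV. x s * Q s t) = (\<Sum>s\<in>UNIV. p s * Q s t) - c * (\<Sum>s\<in>UNIV. q s * Q s t)"
      by (simp add: x_def left_diff_distrib sum_subtractf sum_distrib_left mult.assoc)
    then show "(\<Sum>s\<in>UNIV. x s * Q s t) = x t" using assms(3,4) by (simp add: x_def is_stationary_dist_def)
  qed
  have "(\<Sum>s\<in>UNIV. x s * nstep Q n s t0) = 0" using nstep_left_fix[OF xfix] x0 by simp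
  then have "\<forall>s. x s * nstep Q n s t0 = 0"
    using sum_nonneg_eq_0_iff[of UNIV "\<lambda>s. x s * nstep Q n s t0"] xnn n
    by (simp add: less_imp_le)
  then have xz: "\<forall>s. x s = 0" using n by (metis less_irrefl mult_eq_0_iff)
  then have "p = (\<lambda>s. c * q s)" by (auto simp: x_def fun_eq_iff)
  moreover have "sum p UNIV = 1" "sum q UNIV = 1" using assms(3,4) by (auto simp: is_stationary_dist_def)
  ultimately have "c = 1" by (simp add: sum_distrib_left[symmetric])
  then show ?thesis using \<open>p = _\<close> by simp
qed

lemma max_principle:
  assumes "stoch Q" "ergodic Q" "\<forall>s. (\<Sum>t\<in>UNIV. Q s t * h t) = h s"
  shows "h t = h s"
proof -
  obtain n where n: "\<forall>s s'. 0 < nstep Q n s s'" using assms(2) by (auto simp: ergodic_def)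
  have "Max (range h) \<in> range h" by (rule Max_in) auto
  then obtain s0 where s0: "h s0 = Max (range h)" by (metis imageE)
  have le: "h u \<le> h s0" for u using s0 by simp
  have "(\<Sum>u\<in>UNIV. nstep Q n s0 u * (h s0 - h u)) = h s0 * (\<Sum>u\<in>UNIV. nstep Q n s0 u) - (\<Sum>u\<in>UNIV. nstep Q n s0 u * h u)"
    by (simp add: right_diff_distrib sum_subtractf sum_distrib_left mult.commute)
  also have "\<dots> = 0" using nstep_rowsum[OF assms(1)] nstep_right_fix[OF assms(3)] by simp
  finally have "\<forall>u. nstep Q n s0 u * (h s0 - h u) = 0"
    using sum_nonneg_eq_0_iff[of UNIV "\<lambda>u. nstep Q n s0 u * (h s0 - h u)"] n le
    by (simp add: less_imp_le)
  then have "\<forall>u. h u = h s0" using n by (metis less_irrefl mult_eq_0_iff right_minus_eq)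
  then show ?thesis by metis
qed


lemma stat_exists:
  fixes Q :: "'s::finite \<Rightarrow> 's \<Rightarrow> real"
  assumes "stoch Q"
  shows "\<exists>p. is_stationary_dist Q p"
proof -
  define S where "S = {x::real^'s. (\<forall>i. 0 \<le> x$i) \<and> (\<Sum>i\<in>UNIV. x$i) = 1}"
  define f where "f x = (\<chi> t. \<Sum>s\<in>UNIV. x$s * Q s t)" for x :: "real^'s"
  have cl: "closed S" unfolding S_def
    by (intro closed_Collect_conj closed_Collect_all closed_Collect_le closed_Collect_eq continuous_intros)
  have bd: "bounded S"
  proof -
    have "norm x \<le> 1" if "x \<in> S" for x
    proof -
      have "norm x \<le> (\<Sum>i\<in>UNIV. \<bar>x$i\<bar>)" by (rule norm_le_l1_cart)
      also have "\<dots> = (\<Sum>i\<in>UNIV. x$i)" using that by (simp add: S_def)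
      also have "\<dots> = 1" using that by (simp add: S_def)
      finally show ?thesis .
    qed
    then show ?thesis unfolding bounded_iff by blast
  qed
  have cp: "compact S" using cl bd by (simp add: compact_eq_bounded_closed)
  have cv: "convex S"
  proof (rule convexI)
    fix x y :: "real^'s" and u v :: real
    assume xy: "x \<in> S" "y \<in> S" "0 \<le> u" "0 \<le> v" "u + v = 1"
    have "(\<Sum>i\<in>UNIV. (u *\<^sub>R x + v *\<^sub>R y) $ i) = u * (\<Sum>i\<in>UNIV. x$i) + v * (\<Sum>i\<in>UNIV. y$i)"
      by (simp add: sum.distrib sum_distrib_left)
    then show "u *\<^sub>R x + v *\<^sub>R y \<in> S" using xy by (simp add: S_def)
  qed
  have ne: "S \<noteq> {}"
  proof -
    have "(\<chi> i. 1 / real CARD('s)) \<in> S" by (simp add: S_def)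
    then show ?thesis by blast
  qed
  have ct: "continuous_on S f" unfolding f_def by (intro continuous_intros)
  have fim: "f \<in> S \<rightarrow> S"
  proof
    fix x assume x: "x \<in> S"
    have "0 \<le> f x $ t" for t unfolding f_def using x assms
      by (auto simp: S_def stoch_def intro!: sum_nonneg)
    moreover have "(\<Sum>t\<in>UNIV. f x $ t) = 1"
    proof -
      have "(\<Sum>t\<in>UNIV. f x $ t) = (\<Sum>t\<in>UNIV. \<Sum>s\<in>UNIV. x$s * Q s t)" by (simp add: f_def)
      also have "\<dots> = (\<Sum>s\<in>UNIV. \<Sum>t\<in>UNIV. x$s * Q s t)" by (rule sum.swap)
      also have "\<dots> = (\<Sum>s\<in>UNIV. x$s * (\<Sum>t\<in>UNIV. Q s t))" by (simp add: sum_distrib_left)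
      also have "\<dots> = 1" using assms x by (simp add: stoch_def S_def)
      finally show ?thesis .
    qed
    ultimately show "f x \<in> S" by (simp add: S_def)
  qed
  obtain x where x: "x \<in> S" "f x = x" using brouwer[OF cp cv ne ct fim] by blast
  have "is_stationary_dist Q (\<lambda>s. x$s)"
    unfolding is_stationary_dist_def
  proof (intro conjI allI)
    fix s' show "(\<Sum>s\<in>UNIV. x$s * Q s s') = x$s'"
      using x(2) by (metis f_def vec_lambda_beta)
  qed (use x(1) in \<open>auto simp: S_def\<close>)
  then show ?thesis by blast
qed

lemma poisson:
  fixes Q :: "'s::finite \<Rightarrow> 's \<Rightarrow> real"
  assumes "stoch Q" "ergodic Q" "is_stationary_dist Q p"
  shows "\<exists>g. \<forall>s. g s - (\<Sum>t\<in>UNIV. Q s t * g t) = y s - (\<Sum>t\<in>UNIV. p t * y t)"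
proof -
  define L where "L v = (\<chi> s. v$s - (\<Sum>t\<in>UNIV. Q s t * v$t) + (\<Sum>t\<in>UNIV. p t * v$t))" for v :: "real^'s"
  have lin: "linear L"
  proof (rule linearI)
    fix a b :: "real^'s"
    show "L (a + b) = L a + L b"
      by (simp add: L_def vec_eq_iff distrib_left sum.distrib)
  next
    fix c :: real and b :: "real^'s"
    show "L (c *\<^sub>R b) = c *\<^sub>R L b"
      by (simp add: L_def vec_eq_iff sum_distrib_left algebra_simps)
  qed
  have pst: "\<forall>t. (\<Sum>s\<in>UNIV. p s * Q s t) = p t" "sum p UNIV = 1"
    using assms(3) by (auto simp: is_stationary_dist_def)
  have inj: "inj L"
    unfolding linear_injective_0[OF lin]
  proof (intro allI impI)
    fix v assume L0: "L v = 0"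
    define c where "c = (\<Sum>t\<in>UNIV. p t * v$t)"
    have eq: "v$s - (\<Sum>t\<in>UNIV. Q s t * v$t) + c = 0" for s
      using L0 by (simp add: L_def vec_eq_iff c_def)
    have "(\<Sum>s\<in>UNIV. p s * (\<Sum>t\<in>UNIV. Q s t * v$t)) = (\<Sum>s\<in>UNIV. \<Sum>t\<in>UNIV. p s * Q s t * v$t)"
      by (simp add: sum_distrib_left mult.assoc)
    also have "\<dots> = (\<Sum>t\<in>UNIV. \<Sum>s\<in>UNIV. p s * Q s t * v$t)" by (rule sum.swap)
    also have "\<dots> = (\<Sum>t\<in>UNIV. (\<Sum>s\<in>UNIV. p s * Q s t) * v$t)" by (simp add: sum_distrib_right)
    also have "\<dots> = c" using pst by (simp add: c_def)
    finally have pq: "(\<Sum>s\<in>UNIV. p s * (\<Sum>t\<in>UNIV. Q s t * v$t)) = c" .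
    have "0 = (\<Sum>s\<in>UNIV. p s * (v$s - (\<Sum>t\<in>UNIV. Q s t * v$t) + c))" using eq by simp
    also have "\<dots> = (\<Sum>s\<in>UNIV. p s * v$s) - (\<Sum>s\<in>UNIV. p s * (\<Sum>t\<in>UNIV. Q s t * v$t)) + sum p UNIV * c"
      by (simp add: distrib_left right_diff_distrib sum.distrib sum_subtractf sum_distrib_right)
    also have "\<dots> = c - (\<Sum>s\<in>UNIV. p s * (\<Sum>t\<in>UNIV. Q s t * v$t)) + sum p UNIV * c"
      by (simp only: c_def)
    finally have c0: "c = 0" using pq pst(2) by simp
    have fixv: "\<forall>s. (\<Sum>t\<in>UNIV. Q s t * v$t) = v$s"
    proof
      fix s show "(\<Sum>t\<in>UNIV. Q s t * v$t) = v$s" using eq[of s] c0 by linarith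
    qed
    fix s0 :: 's
    have const: "v$t = v$s0" for t using max_principle[OF assms(1,2) fixv] by blast
    have "c = (\<Sum>t\<in>UNIV. p t * v$s0)" unfolding c_def by (rule sum.cong) (use const in auto)
    also have "\<dots> = v$s0" using pst by (simp add: sum_distrib_right[symmetric])
    finally have "v$s0 = 0" using c0 by simp
    then show "v = 0" using const unfolding vec_eq_iff by (metis zero_index)
  qed
  have "surj L" by (rule linear_injective_imp_surjective[OF lin inj]) simp
  then obtain v where v: "L v = (\<chi> s. y s)" by (metis surjD)
  have eq: "v$s - (\<Sum>t\<in>UNIV. Q s t * v$t) + (\<Sum>t\<in>UNIV. p t * v$t) = y s" for s
    using v by (simp add: L_def vec_eq_iff)
  have "(\<Sum>s\<in>UNIV. p s * (\<Sum>t\<in>UNIV. Q s t * v$t)) = (\<Sum>s\<in>UNIV. \<Sum>t\<in>UNIV. p s * Q s t * v$t)"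
    by (simp add: sum_distrib_left mult.assoc)
  also have "\<dots> = (\<Sum>t\<in>UNIV. \<Sum>s\<in>UNIV. p s * Q s t * v$t)" by (rule sum.swap)
  also have "\<dots> = (\<Sum>t\<in>UNIV. (\<Sum>s\<in>UNIV. p s * Q s t) * v$t)" by (simp add: sum_distrib_right)
  also have "\<dots> = (\<Sum>t\<in>UNIV. p t * v$t)" using pst by simp
  finally have pq: "(\<Sum>s\<in>UNIV. p s * (\<Sum>t\<in>UNIV. Q s t * v$t)) = (\<Sum>t\<in>UNIV. p t * v$t)" .
  have "(\<Sum>s\<in>UNIV. p s * y s) = (\<Sum>s\<in>UNIV. p s * (v$s - (\<Sum>t\<in>UNIV. Q s t * v$t) + (\<Sum>t\<in>UNIV. p t * v$t)))"
    using eq by simp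
  also have "\<dots> = (\<Sum>s\<in>UNIV. p s * v$s) - (\<Sum>s\<in>UNIV. p s * (\<Sum>t\<in>UNIV. Q s t * v$t)) + sum p UNIV * (\<Sum>t\<in>UNIV. p t * v$t)"
    by (simp add: distrib_left right_diff_distrib sum.distrib sum_subtractf sum_distrib_right)
  also have "\<dots> = (\<Sum>t\<in>UNIV. p t * v$t)" using pq pst by simp
  finally have "(\<Sum>s\<in>UNIV. p s * y s) = (\<Sum>t\<in>UNIV. p t * v$t)" .
  then have "\<forall>s. v$s - (\<Sum>t\<in>UNIV. Q s t * v$t) = y s - (\<Sum>t\<in>UNIV. p t * y t)"
    using eq by (metis add_diff_cancel_right')
  then show ?thesis by (rule exI[where x="\<lambda>s. v$s"])
qed


lemma mixp_0[simp]: "mixp 0 m1 m2 = m1" by (simp add: mixp_def)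

lemma policy_mixp:
  assumes "is_policy Ai m1" "is_policy Ai m2" "0 \<le> d" "d \<le> 1"
  shows "is_policy Ai (mixp d m1 m2)"
proof -
  have "(\<Sum>a\<in>Ai. (1 - d) * m1 s a + d * m2 s a) = (1 - d) * (\<Sum>a\<in>Ai. m1 s a) + d * (\<Sum>a\<in>Ai. m2 s a)" for s
    by (simp add: sum.distrib sum_distrib_left)
  then show ?thesis using assms unfolding is_policy_def mixp_def
    by (auto intro!: add_nonneg_nonneg mult_nonneg_nonneg)
qed

lemma jpol_upd: "is_joint_policy A mu \<Longrightarrow> is_policy (A i) m \<Longrightarrow> is_joint_policy A (mu(i := m))"
  by (simp add: is_joint_policy_def)

lemma jprob_upd:
  fixes mu :: "'i::finite \<Rightarrow> 's \<Rightarrow> 'a \<Rightarrow> real"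
  shows "jprob (mu(i := X)) s a = X s (a i) * (\<Prod>j\<in>UNIV - {i}. mu j s (a j))"
proof -
  have "jprob (mu(i := X)) s a = (mu(i := X)) i s (a i) * (\<Prod>j\<in>UNIV - {i}. (mu(i := X)) j s (a j))"
    unfolding jprob_def by (rule prod.remove) auto
  also have "(\<Prod>j\<in>UNIV - {i}. (mu(i := X)) j s (a j)) = (\<Prod>j\<in>UNIV - {i}. mu j s (a j))"
    by (rule prod.cong) auto
  finally show ?thesis by (simp only: fun_upd_same)
qed

lemma jprob_self:
  fixes mu :: "'i::finite \<Rightarrow> 's \<Rightarrow> 'a \<Rightarrow> real"
  shows "jprob mu s a = mu i s (a i) * (\<Prod>j\<in>UNIV - {i}. mu j s (a j))"
  using jprob_upd[of "mu" i "mu i" s a] by simp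

lemma jprob_mix:
  fixes mu :: "'i::finite \<Rightarrow> 's \<Rightarrow> 'a \<Rightarrow> real"
  shows "jprob (mu(i := mixp d (mu i) m)) s a = (1 - d) * jprob mu s a + d * jprob (mu(i := m)) s a"
  unfolding jprob_upd jprob_self[of mu s a i] by (simp add: mixp_def algebra_simps)

lemma jprob_nonneg: "is_joint_policy A mu \<Longrightarrow> 0 \<le> jprob mu s a"
  unfolding jprob_def is_joint_policy_def is_policy_def by (auto intro: prod_nonneg)

lemma sum_jprob:
  fixes A :: "'i::finite \<Rightarrow> 'a::finite set"
  assumes "is_joint_policy A mu"
  shows "(\<Sum>a\<in>joint_acts A. jprob mu s a) = 1"
proof -
  have "(\<Sum>a\<in>joint_acts A. jprob mu s a) = (\<Prod>i\<in>UNIV. \<Sum>y\<in>A i. mu i s y)"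
    unfolding joint_acts_def jprob_def by (rule prod_sum_PiE[symmetric]) auto
  also have "\<dots> = 1" using assms by (simp add: is_joint_policy_def is_policy_def)
  finally show ?thesis .
qed

lemma jprob_local:
  fixes mu :: "'i::finite \<Rightarrow> 's \<Rightarrow> 'a \<Rightarrow> real"
  assumes "m s = m' s"
  shows "jprob (mu(i := m)) s a = jprob (mu(i := m')) s a"
  using assms by (simp add: jprob_upd)

locale game =
  fixes A :: "'i::finite \<Rightarrow> 'a::finite set"
    and P :: "'s::finite \<Rightarrow> ('i \<Rightarrow> 'a) \<Rightarrow> 's \<Rightarrow> real"
  assumes P_nonneg: "\<forall>s a s'. a \<in> joint_acts A \<longrightarrow> 0 \<le> P s a s'"
    and P_sum: "\<forall>s a. a \<in> joint_acts A \<longrightarrow> (\<Sum>s'\<in>UNIV. P s a s') = 1"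
    and erg: "\<forall>nu. is_joint_policy A nu \<longrightarrow> ergodic (chain A P nu)"
begin

lemma chain_stoch: "is_joint_policy A nu \<Longrightarrow> stoch (chain A P nu)"
proof -
  assume nu: "is_joint_policy A nu"
  have "0 \<le> chain A P nu s t" for s t
    unfolding chain_def using P_nonneg jprob_nonneg[OF nu] by (auto intro!: sum_nonneg mult_nonneg_nonneg)
  moreover have "(\<Sum>t\<in>UNIV. chain A P nu s t) = 1" for s
  proof -
    have "(\<Sum>t\<in>UNIV. chain A P nu s t) = (\<Sum>t\<in>UNIV. \<Sum>a\<in>joint_acts A. jprob nu s a * P s a t)"
      by (simp add: chain_def)
    also have "\<dots> = (\<Sum>a\<in>joint_acts A. \<Sum>t\<in>UNIV. jprob nu s a * P s a t)" by (rule sum.swap)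
    also have "\<dots> = (\<Sum>a\<in>joint_acts A. jprob nu s a * (\<Sum>t\<in>UNIV. P s a t))" by (simp add: sum_distrib_left)
    also have "\<dots> = (\<Sum>a\<in>joint_acts A. jprob nu s a)" by (rule sum.cong) (use P_sum in auto)
    also have "\<dots> = 1" by (rule sum_jprob[OF nu])
    finally show ?thesis .
  qed
  ultimately show ?thesis by (simp add: stoch_def)
qed

lemma sd_stat: "is_joint_policy A nu \<Longrightarrow> is_stationary_dist (chain A P nu) (stat_dist A P nu)"
proof -
  assume nu: "is_joint_policy A nu"
  have st: "stoch (chain A P nu)" by (rule chain_stoch[OF nu])
  obtain p where p: "is_stationary_dist (chain A P nu) p" using stat_exists[OF st] by blast
  have "\<exists>!p. is_stationary_dist (chain A P nu) p"
    using p stat_unique[OF st erg[rule_format, OF nu]] by blast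
  then show ?thesis unfolding stat_dist_def by (rule theI')
qed

lemma sd_pos: "is_joint_policy A nu \<Longrightarrow> 0 < stat_dist A P nu s"
  using stat_pos[OF chain_stoch erg[rule_format] sd_stat] by blast

lemma sd_sum: "is_joint_policy A nu \<Longrightarrow> (\<Sum>s\<in>UNIV. stat_dist A P nu s) = 1"
  using sd_stat by (simp add: is_stationary_dist_def)

lemma sd_le1: "is_joint_policy A nu \<Longrightarrow> stat_dist A P nu s \<le> 1"
proof -
  assume nu: "is_joint_policy A nu"
  have "stat_dist A P nu s \<le> (\<Sum>s\<in>UNIV. stat_dist A P nu s)"
    by (rule member_le_sum) (use sd_pos[OF nu] in \<open>auto intro: less_imp_le\<close>)
  then show ?thesis using sd_sum[OF nu] by simp
qed

end


lemma pd_abstract: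
  fixes pi c0 c1 h :: "'s::finite \<Rightarrow> real" and Q0 Q1 :: "'s \<Rightarrow> 's \<Rightarrow> real"
  assumes st: "\<forall>t. (\<Sum>s\<in>UNIV. pi s * ((1 - d) * Q0 s t + d * Q1 s t)) = pi t"
    and sum1: "sum pi UNIV = 1"
    and ph: "\<forall>s. h s - (\<Sum>t\<in>UNIV. Q0 s t * h t) = c0 s - e0"
  shows "(\<Sum>s\<in>UNIV. pi s * ((1 - d) * c0 s + d * c1 s)) - e0
         = d * (\<Sum>s\<in>UNIV. pi s * (c1 s + (\<Sum>t\<in>UNIV. Q1 s t * h t) - h s - e0))"
proof -
  define W0 where "W0 s = (\<Sum>t\<in>UNIV. Q0 s t * h t)" for s
  define W1 where "W1 s = (\<Sum>t\<in>UNIV. Q1 s t * h t)" for s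
  have "(\<Sum>t\<in>UNIV. pi t * h t) = (\<Sum>t\<in>UNIV. (\<Sum>s\<in>UNIV. pi s * ((1 - d) * Q0 s t + d * Q1 s t)) * h t)"
    using st by simp
  also have "\<dots> = (\<Sum>t\<in>UNIV. \<Sum>s\<in>UNIV. pi s * ((1 - d) * Q0 s t + d * Q1 s t) * h t)"
    by (simp add: sum_distrib_right)
  also have "\<dots> = (\<Sum>s\<in>UNIV. \<Sum>t\<in>UNIV. pi s * ((1 - d) * Q0 s t + d * Q1 s t) * h t)"
    by (rule sum.swap)
  also have "\<dots> = (\<Sum>s\<in>UNIV. pi s * ((1 - d) * W0 s + d * W1 s))"
  proof (rule sum.cong)
    fix s
    have "(\<Sum>t\<in>UNIV. pi s * ((1 - d) * Q0 s t + d * Q1 s t) * h t)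
        = (\<Sum>t\<in>UNIV. pi s * (1 - d) * (Q0 s t * h t) + pi s * d * (Q1 s t * h t))"
      by (rule sum.cong) (auto simp: algebra_simps)
    also have "\<dots> = pi s * (1 - d) * W0 s + pi s * d * W1 s"
      by (simp add: sum.distrib sum_distrib_left W0_def W1_def)
    finally show "(\<Sum>t\<in>UNIV. pi s * ((1 - d) * Q0 s t + d * Q1 s t) * h t) = pi s * ((1 - d) * W0 s + d * W1 s)"
      by (simp add: algebra_simps)
  qed simp
  also have "\<dots> = (1 - d) * (\<Sum>s\<in>UNIV. pi s * W0 s) + d * (\<Sum>s\<in>UNIV. pi s * W1 s)"
    by (simp add: distrib_left sum.distrib sum_distrib_left mult.left_commute)
  finally have sh: "(\<Sum>t\<in>UNIV. pi t * h t) = (1 - d) * (\<Sum>s\<in>UNIV. pi s * W0 s) + d * (\<Sum>s\<in>UNIV. pi s * W1 s)" .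
  have c0e: "c0 s = h s - W0 s + e0" for s using ph W0_def by (metis add_diff_cancel_right' diff_add_cancel)
  have "(\<Sum>s\<in>UNIV. pi s * c0 s) = (\<Sum>s\<in>UNIV. pi s * h s - pi s * W0 s + pi s * e0)"
    by (rule sum.cong) (auto simp: c0e algebra_simps)
  also have "\<dots> = (\<Sum>s\<in>UNIV. pi s * h s) - (\<Sum>s\<in>UNIV. pi s * W0 s) + sum pi UNIV * e0"
    by (simp add: sum.distrib sum_subtractf sum_distrib_right)
  finally have sc0: "(\<Sum>s\<in>UNIV. pi s * c0 s) = (\<Sum>s\<in>UNIV. pi s * h s) - (\<Sum>s\<in>UNIV. pi s * W0 s) + e0"
    using sum1 by simp
  have l: "(\<Sum>s\<in>UNIV. pi s * ((1 - d) * c0 s + d * c1 s)) = (1 - d) * (\<Sum>s\<in>UNIV. pi s * c0 s) + d * (\<Sum>s\<in>UNIV. pi s * c1 s)"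
    by (simp add: distrib_left sum.distrib sum_distrib_left mult.left_commute)
  have "(\<Sum>s\<in>UNIV. pi s * (c1 s + W1 s - h s - e0))
      = (\<Sum>s\<in>UNIV. pi s * c1 s) + (\<Sum>s\<in>UNIV. pi s * W1 s) - (\<Sum>s\<in>UNIV. pi s * h s) - sum pi UNIV * e0"
    by (simp add: distrib_left right_diff_distrib sum.distrib sum_subtractf sum_distrib_right)
  then have r: "(\<Sum>s\<in>UNIV. pi s * (c1 s + W1 s - h s - e0))
      = (\<Sum>s\<in>UNIV. pi s * c1 s) + (\<Sum>s\<in>UNIV. pi s * W1 s) - (\<Sum>s\<in>UNIV. pi s * h s) - e0"
    using sum1 by simp
  show ?thesis unfolding l W1_def[symmetric] r sc0
    using sh by (simp add: algebra_simps)
qed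

lemma sum_mix:
  fixes x y g :: "'b \<Rightarrow> real"
  shows "(\<Sum>a\<in>S. ((1 - d) * x a + d * y a) * g a) = (1 - d) * (\<Sum>a\<in>S. x a * g a) + d * (\<Sum>a\<in>S. y a * g a)"
  by (simp add: distrib_right sum.distrib sum_distrib_left mult.assoc)

context game
begin

definition ceta :: "('s \<Rightarrow> ('i \<Rightarrow> 'a) \<Rightarrow> real) \<Rightarrow> ('i \<Rightarrow> 's \<Rightarrow> 'a \<Rightarrow> real) \<Rightarrow> 's \<Rightarrow> real" where
  "ceta f nu s = (\<Sum>a\<in>joint_acts A. jprob nu s a * f s a)"

definition etaf :: "('s \<Rightarrow> ('i \<Rightarrow> 'a) \<Rightarrow> real) \<Rightarrow> ('i \<Rightarrow> 's \<Rightarrow> 'a \<Rightarrow> real) \<Rightarrow> real" where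
  "etaf f nu = (\<Sum>s\<in>UNIV. stat_dist A P nu s * ceta f nu s)"

lemma eta_etaf: "eta A P r nu = etaf r nu" by (simp add: eta_def etaf_def ceta_def)

lemma chain_mix: "chain A P (mu(i := mixp d (mu i) m)) s t = (1 - d) * chain A P mu s t + d * chain A P (mu(i := m)) s t"
  unfolding chain_def jprob_mix by (rule sum_mix)

lemma ceta_mix: "ceta f (mu(i := mixp d (mu i) m)) s = (1 - d) * ceta f mu s + d * ceta f (mu(i := m)) s"
  unfolding ceta_def jprob_mix by (rule sum_mix)

end


context game
begin

definition hp :: "('s \<Rightarrow> ('i \<Rightarrow> 'a) \<Rightarrow> real) \<Rightarrow> ('i \<Rightarrow> 's \<Rightarrow> 'a \<Rightarrow> real) \<Rightarrow> 's \<Rightarrow> real" where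
  "hp f mu = (SOME g. \<forall>s. g s - (\<Sum>t\<in>UNIV. chain A P mu s t * g t) = ceta f mu s - etaf f mu)"

lemma hp_eq:
  assumes "is_joint_policy A mu"
  shows "\<forall>s. hp f mu s - (\<Sum>t\<in>UNIV. chain A P mu s t * hp f mu t) = ceta f mu s - etaf f mu"
proof -
  have "\<exists>g. \<forall>s. g s - (\<Sum>t\<in>UNIV. chain A P mu s t * g t) = ceta f mu s - (\<Sum>t\<in>UNIV. stat_dist A P mu t * ceta f mu t)"
    by (rule poisson[OF chain_stoch[OF assms] erg[rule_format, OF assms] sd_stat[OF assms]])
  then have "\<exists>g. \<forall>s. g s - (\<Sum>t\<in>UNIV. chain A P mu s t * g t) = ceta f mu s - etaf f mu"
    by (simp add: etaf_def)
  then show ?thesis unfolding hp_def by (rule someI_ex)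
qed

definition adv :: "('s \<Rightarrow> ('i \<Rightarrow> 'a) \<Rightarrow> real) \<Rightarrow> ('i \<Rightarrow> 's \<Rightarrow> 'a \<Rightarrow> real) \<Rightarrow> 'i \<Rightarrow> ('s \<Rightarrow> 'a \<Rightarrow> real) \<Rightarrow> 's \<Rightarrow> real" where
  "adv f mu i m s = ceta f (mu(i := m)) s + (\<Sum>t\<in>UNIV. chain A P (mu(i := m)) s t * hp f mu t) - hp f mu s - etaf f mu"

lemma pd:
  assumes mu: "is_joint_policy A mu" and m: "is_policy (A i) m" and d: "0 \<le> d" "d \<le> 1"
  shows "etaf f (mu(i := mixp d (mu i) m)) - etaf f mu
       = d * (\<Sum>s\<in>UNIV. stat_dist A P (mu(i := mixp d (mu i) m)) s * adv f mu i m s)"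
proof -
  define nu where "nu = mu(i := mixp d (mu i) m)"
  have nu: "is_joint_policy A nu" unfolding nu_def
    by (rule jpol_upd[OF mu policy_mixp]) (use mu m d in \<open>auto simp: is_joint_policy_def\<close>)
  have st0: "\<forall>t. (\<Sum>s\<in>UNIV. stat_dist A P nu s * chain A P nu s t) = stat_dist A P nu t"
    using sd_stat[OF nu] unfolding is_stationary_dist_def by blast
  have st: "\<forall>t. (\<Sum>s\<in>UNIV. stat_dist A P nu s * ((1 - d) * chain A P mu s t + d * chain A P (mu(i := m)) s t)) = stat_dist A P nu t"
    using st0 unfolding nu_def chain_mix .
  have "etaf f nu = (\<Sum>s\<in>UNIV. stat_dist A P nu s * ((1 - d) * ceta f mu s + d * ceta f (mu(i := m)) s))"
    unfolding etaf_def nu_def ceta_mix ..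
  then have "etaf f nu - etaf f mu = d * (\<Sum>s\<in>UNIV. stat_dist A P nu s * (ceta f (mu(i := m)) s + (\<Sum>t\<in>UNIV. chain A P (mu(i := m)) s t * hp f mu t) - hp f mu s - etaf f mu))"
    using pd_abstract[OF st sd_sum[OF nu] hp_eq[OF mu]] by simp
  then show ?thesis unfolding nu_def adv_def .
qed

lemma ceta_const: "is_joint_policy A nu \<Longrightarrow> ceta (\<lambda>s a. y s) nu s = y s"
  unfolding ceta_def using sum_jprob[of A nu s] by (simp add: sum_distrib_right[symmetric])

lemma etaf_const: "is_joint_policy A nu \<Longrightarrow> etaf (\<lambda>s a. y s) nu = (\<Sum>s\<in>UNIV. stat_dist A P nu s * y s)"
  unfolding etaf_def by (simp add: ceta_const)

lemma sum_sd_bound: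
  assumes "is_joint_policy A nu"
  shows "\<bar>\<Sum>s\<in>UNIV. stat_dist A P nu s * z s\<bar> \<le> (\<Sum>s\<in>UNIV. \<bar>z s\<bar>)"
proof -
  have "\<bar>\<Sum>s\<in>UNIV. stat_dist A P nu s * z s\<bar> \<le> (\<Sum>s\<in>UNIV. \<bar>stat_dist A P nu s * z s\<bar>)" by (rule sum_abs)
  also have "\<dots> \<le> (\<Sum>s\<in>UNIV. \<bar>z s\<bar>)"
  proof (rule sum_mono)
    fix s
    have "0 < stat_dist A P nu s" "stat_dist A P nu s \<le> 1" using sd_pos[OF assms] sd_le1[OF assms] by auto
    then show "\<bar>stat_dist A P nu s * z s\<bar> \<le> \<bar>z s\<bar>"
      by (simp add: abs_mult mult_left_le_one_le)
  qed
  finally show ?thesis .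
qed

lemma sd_cont:
  assumes mu: "is_joint_policy A mu" and m: "is_policy (A i) m" and d: "0 \<le> d" "d \<le> 1"
  shows "\<bar>(\<Sum>s\<in>UNIV. stat_dist A P (mu(i := mixp d (mu i) m)) s * y s) - (\<Sum>s\<in>UNIV. stat_dist A P mu s * y s)\<bar>
     \<le> d * (\<Sum>s\<in>UNIV. \<bar>adv (\<lambda>s a. y s) mu i m s\<bar>)"
proof -
  define nu where "nu = mu(i := mixp d (mu i) m)"
  have nu: "is_joint_policy A nu" unfolding nu_def
    by (rule jpol_upd[OF mu policy_mixp]) (use mu m d in \<open>auto simp: is_joint_policy_def\<close>)
  have "(\<Sum>s\<in>UNIV. stat_dist A P nu s * y s) - (\<Sum>s\<in>UNIV. stat_dist A P mu s * y s)
     = d * (\<Sum>s\<in>UNIV. stat_dist A P nu s * adv (\<lambda>s a. y s) mu i m s)"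
    using pd[OF mu m d, of "\<lambda>s a. y s", folded nu_def] etaf_const[OF nu] etaf_const[OF mu] by simp
  also have "\<bar>\<dots>\<bar> \<le> d * (\<Sum>s\<in>UNIV. \<bar>adv (\<lambda>s a. y s) mu i m s\<bar>)"
    using sum_sd_bound[OF nu] d by (simp add: abs_mult mult_left_mono)
  finally show ?thesis unfolding nu_def by simp
qed

lemma adv_local:
  assumes "m s = m' s"
  shows "adv f mu i m s = adv f mu i m' s"
  unfolding adv_def ceta_def chain_def jprob_local[of m s m' mu i, OF assms] ..

lemma adv_self:
  assumes "is_joint_policy A mu"
  shows "adv f mu i (mu i) s = 0"
proof -
  have h: "hp f mu s - (\<Sum>t\<in>UNIV. chain A P mu s t * hp f mu t) = ceta f mu s - etaf f mu"
    using hp_eq[OF assms] by blast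
  have e: "mu(i := mu i) = mu" by simp
  show ?thesis unfolding adv_def e using h by linarith
qed

definition dk :: "'a \<Rightarrow> 's \<Rightarrow> 'a \<Rightarrow> real" where
  "dk k = (\<lambda>s a. if a = k then 1 else 0)"

lemma adv_lin:
  assumes m: "is_policy (A i) m"
  shows "adv f mu i m s = (\<Sum>k\<in>A i. m s k * adv f mu i (dk k) s)"
proof -
  define q where "q a = f s a + (\<Sum>t\<in>UNIV. P s a t * hp f mu t)" for a
  have cq: "ceta f (mu(i := X)) s + (\<Sum>t\<in>UNIV. chain A P (mu(i := X)) s t * hp f mu t)
            = (\<Sum>a\<in>joint_acts A. jprob (mu(i := X)) s a * q a)" for X
  proof -
    have "(\<Sum>t\<in>UNIV. chain A P (mu(i := X)) s t * hp f mu t)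
        = (\<Sum>t\<in>UNIV. \<Sum>a\<in>joint_acts A. jprob (mu(i := X)) s a * (P s a t * hp f mu t))"
      by (simp add: chain_def sum_distrib_right mult.assoc)
    also have "\<dots> = (\<Sum>a\<in>joint_acts A. \<Sum>t\<in>UNIV. jprob (mu(i := X)) s a * (P s a t * hp f mu t))"
      by (rule sum.swap)
    also have "\<dots> = (\<Sum>a\<in>joint_acts A. jprob (mu(i := X)) s a * (\<Sum>t\<in>UNIV. P s a t * hp f mu t))"
      by (simp add: sum_distrib_left)
    finally show ?thesis unfolding ceta_def q_def by (simp add: distrib_left sum.distrib)
  qed
  have jd: "jprob (mu(i := m)) s a = (\<Sum>k\<in>A i. m s k * jprob (mu(i := dk k)) s a)" if a: "a \<in> joint_acts A" for a
  proof -
    have ai: "a i \<in> A i" using a by (auto simp: joint_acts_def)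
    have "(\<Sum>k\<in>A i. m s k * jprob (mu(i := dk k)) s a)
        = (\<Sum>k\<in>A i. (if a i = k then m s k else 0) * (\<Prod>j\<in>UNIV - {i}. mu j s (a j)))"
      by (rule sum.cong) (auto simp: jprob_upd dk_def)
    also have "\<dots> = (\<Sum>k\<in>A i. if a i = k then m s k else 0) * (\<Prod>j\<in>UNIV - {i}. mu j s (a j))"
      by (simp only: sum_distrib_right)
    also have "\<dots> = m s (a i) * (\<Prod>j\<in>UNIV - {i}. mu j s (a j))"
      using ai by simp
    finally show ?thesis by (simp add: jprob_upd)
  qed
  have msum: "(\<Sum>k\<in>A i. m s k) = 1" using m by (simp add: is_policy_def)
  have "(\<Sum>a\<in>joint_acts A. jprob (mu(i := m)) s a * q a)
      = (\<Sum>a\<in>joint_acts A. \<Sum>k\<in>A i. m s k * (jprob (mu(i := dk k)) s a * q a))"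
    by (rule sum.cong) (auto simp: jd sum_distrib_right mult.assoc)
  also have "\<dots> = (\<Sum>k\<in>A i. \<Sum>a\<in>joint_acts A. m s k * (jprob (mu(i := dk k)) s a * q a))"
    by (rule sum.swap)
  also have "\<dots> = (\<Sum>k\<in>A i. m s k * (\<Sum>a\<in>joint_acts A. jprob (mu(i := dk k)) s a * q a))"
    by (simp add: sum_distrib_left)
  finally have e1: "(\<Sum>a\<in>joint_acts A. jprob (mu(i := m)) s a * q a) = (\<Sum>k\<in>A i. m s k * (\<Sum>a\<in>joint_acts A. jprob (mu(i := dk k)) s a * q a))" .
  have "(\<Sum>k\<in>A i. m s k * adv f mu i (dk k) s)
     = (\<Sum>k\<in>A i. m s k * (\<Sum>a\<in>joint_acts A. jprob (mu(i := dk k)) s a * q a) - m s k * (hp f mu s + etaf f mu))"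
  proof (rule sum.cong)
    fix k
    have "adv f mu i (dk k) s = (\<Sum>a\<in>joint_acts A. jprob (mu(i := dk k)) s a * q a) - (hp f mu s + etaf f mu)"
      unfolding adv_def using cq[of "dk k"] by linarith
    then show "m s k * adv f mu i (dk k) s = m s k * (\<Sum>a\<in>joint_acts A. jprob (mu(i := dk k)) s a * q a) - m s k * (hp f mu s + etaf f mu)"
      by (simp only: right_diff_distrib)
  qed simp
  also have "\<dots> = (\<Sum>k\<in>A i. m s k * (\<Sum>a\<in>joint_acts A. jprob (mu(i := dk k)) s a * q a)) - (\<Sum>k\<in>A i. m s k) * (hp f mu s + etaf f mu)"
    by (simp add: sum_subtractf sum_distrib_right)
  finally show ?thesis unfolding adv_def cq e1[symmetric] msum by simp
qed

end


lemma tendsto_right0_bound: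
  fixes F :: "real \<Rightarrow> real"
  assumes "\<forall>d. 0 < d \<and> d \<le> 1 \<longrightarrow> \<bar>F d - L\<bar> \<le> K * d"
  shows "(F \<longlongrightarrow> L) (at_right 0)"
proof (rule tendsto_sandwich[where f="\<lambda>d. L - K * d" and h="\<lambda>d. L + K * d"])
  have ev: "eventually (\<lambda>d. d \<in> {0<..<1}) (at_right (0::real))" by (rule eventually_at_right_real) simp
  show "eventually (\<lambda>d. L - K * d \<le> F d) (at_right 0)"
    using ev by eventually_elim (use assms in \<open>auto simp: abs_le_iff\<close>)
  show "eventually (\<lambda>d. F d \<le> L + K * d) (at_right 0)"
    using ev by eventually_elim (use assms in \<open>auto simp: abs_le_iff\<close>)
  have "((\<lambda>d. L - K * d) \<longlongrightarrow> L - K * 0) (at_right 0)" by (intro tendsto_intros)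
  then show "((\<lambda>d. L - K * d) \<longlongrightarrow> L) (at_right 0)" by simp
  have "((\<lambda>d. L + K * d) \<longlongrightarrow> L + K * 0) (at_right 0)" by (intro tendsto_intros)
  then show "((\<lambda>d. L + K * d) \<longlongrightarrow> L) (at_right 0)" by simp
qed

context game
begin

lemma etaf_lin:
  assumes nu: "is_joint_policy A nu"
  shows "etaf (\<lambda>s a. g s a + x * h s a + z) nu = etaf g nu + x * etaf h nu + z"
proof -
  have c: "ceta (\<lambda>s a. g s a + x * h s a + z) nu s = ceta g nu s + x * ceta h nu s + z" for s
  proof -
    have "ceta (\<lambda>s a. g s a + x * h s a + z) nu s
        = (\<Sum>a\<in>joint_acts A. jprob nu s a * g s a + x * (jprob nu s a * h s a) + z * jprob nu s a)"
      unfolding ceta_def by (rule sum.cong) (auto simp: algebra_simps)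
    also have "\<dots> = ceta g nu s + x * ceta h nu s + z * (\<Sum>a\<in>joint_acts A. jprob nu s a)"
      unfolding ceta_def by (simp add: sum.distrib sum_distrib_left)
    finally show ?thesis using sum_jprob[OF nu] by simp
  qed
  have "etaf (\<lambda>s a. g s a + x * h s a + z) nu
      = (\<Sum>s\<in>UNIV. stat_dist A P nu s * ceta g nu s + x * (stat_dist A P nu s * ceta h nu s) + z * stat_dist A P nu s)"
    unfolding etaf_def c by (rule sum.cong) (auto simp: algebra_simps)
  also have "\<dots> = etaf g nu + x * etaf h nu + z * (\<Sum>s\<in>UNIV. stat_dist A P nu s)"
    unfolding etaf_def by (simp add: sum.distrib sum_distrib_left)
  finally show ?thesis using sd_sum[OF nu] by simp
qed

lemma MVJ_split:
  assumes nu: "is_joint_policy A nu"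
  shows "MVJ A P r \<beta> nu = etaf (\<lambda>s a. r s a - \<beta> * (r s a - e0)\<^sup>2) nu + \<beta> * (eta A P r nu - e0)\<^sup>2"
proof -
  define et where "et = eta A P r nu"
  have z1: "zeta A P r nu = etaf (\<lambda>s a. (r s a - et)\<^sup>2) nu"
    unfolding zeta_def etaf_def ceta_def et_def ..
  have pw: "(\<lambda>s a. (r s a - et)\<^sup>2) = (\<lambda>s a. (r s a - e0)\<^sup>2 + (-2 * (et - e0)) * r s a + (et\<^sup>2 - e0\<^sup>2))"
    by (auto simp: fun_eq_iff power2_eq_square algebra_simps)
  have z2: "zeta A P r nu = etaf (\<lambda>s a. (r s a - e0)\<^sup>2) nu + (-2 * (et - e0)) * et + (et\<^sup>2 - e0\<^sup>2)"
  proof -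
    have "zeta A P r nu = etaf (\<lambda>s a. (r s a - e0)\<^sup>2 + (-2 * (et - e0)) * r s a + (et\<^sup>2 - e0\<^sup>2)) nu"
      by (simp only: z1 pw)
    also have "\<dots> = etaf (\<lambda>s a. (r s a - e0)\<^sup>2) nu + (-2 * (et - e0)) * etaf r nu + (et\<^sup>2 - e0\<^sup>2)"
      by (rule etaf_lin[OF nu])
    finally show ?thesis by (simp add: et_def eta_etaf)
  qed
  have pw2: "(\<lambda>s a. r s a - \<beta> * (r s a - e0)\<^sup>2) = (\<lambda>s a. r s a + (- \<beta>) * (r s a - e0)\<^sup>2 + 0)"
    by (auto simp: fun_eq_iff)
  have w: "etaf (\<lambda>s a. r s a - \<beta> * (r s a - e0)\<^sup>2) nu = et - \<beta> * etaf (\<lambda>s a. (r s a - e0)\<^sup>2) nu"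
  proof -
    have "etaf (\<lambda>s a. r s a - \<beta> * (r s a - e0)\<^sup>2) nu = etaf (\<lambda>s a. r s a + (- \<beta>) * (r s a - e0)\<^sup>2 + 0) nu"
      by (simp only: pw2)
    also have "\<dots> = etaf r nu + (- \<beta>) * etaf (\<lambda>s a. (r s a - e0)\<^sup>2) nu + 0"
      by (rule etaf_lin[OF nu])
    finally show ?thesis by (simp add: et_def eta_etaf)
  qed
  show ?thesis unfolding MVJ_def z2 w et_def[symmetric]
    by (simp add: power2_eq_square algebra_simps)
qed

lemma J_diff:
  fixes r :: "'s \<Rightarrow> ('i \<Rightarrow> 'a) \<Rightarrow> real" and \<beta> :: real
  assumes mu: "is_joint_policy A mu" and m: "is_policy (A i) m" and d: "0 \<le> d" "d \<le> 1"
  defines "w \<equiv> (\<lambda>s a. r s a - \<beta> * (r s a - eta A P r mu)\<^sup>2)"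
  shows "MVJ A P r \<beta> (mu(i := mixp d (mu i) m)) - MVJ A P r \<beta> mu
     = d * (\<Sum>s\<in>UNIV. stat_dist A P (mu(i := mixp d (mu i) m)) s * adv w mu i m s)
       + \<beta> * (d * (\<Sum>s\<in>UNIV. stat_dist A P (mu(i := mixp d (mu i) m)) s * adv r mu i m s))\<^sup>2"
proof -
  define nu where "nu = mu(i := mixp d (mu i) m)"
  have nu: "is_joint_policy A nu" unfolding nu_def
    by (rule jpol_upd[OF mu policy_mixp]) (use mu m d in \<open>auto simp: is_joint_policy_def\<close>)
  have "MVJ A P r \<beta> nu - MVJ A P r \<beta> mu = (etaf w nu - etaf w mu) + \<beta> * (eta A P r nu - eta A P r mu)\<^sup>2"
    using MVJ_split[OF nu, of r \<beta> "eta A P r mu"] MVJ_split[OF mu, of r \<beta> "eta A P r mu"]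
    unfolding w_def by simp
  also have "eta A P r nu - eta A P r mu = etaf r nu - etaf r mu" by (simp add: eta_etaf)
  finally show ?thesis unfolding nu_def pd[OF mu m d] .
qed

lemma Dir_val:
  fixes r :: "'s \<Rightarrow> ('i \<Rightarrow> 'a) \<Rightarrow> real" and \<beta> :: real
  assumes mu: "is_joint_policy A mu" and m: "is_policy (A i) m"
  defines "w \<equiv> (\<lambda>s a. r s a - \<beta> * (r s a - eta A P r mu)\<^sup>2)"
  shows "Dir A P r \<beta> mu i m = (\<Sum>s\<in>UNIV. stat_dist A P mu s * adv w mu i m s)"
proof -
  define X0 where "X0 = (\<Sum>s\<in>UNIV. stat_dist A P mu s * adv w mu i m s)"
  define C1 where "C1 = (\<Sum>s\<in>UNIV. \<bar>adv (\<lambda>s a. adv w mu i m s) mu i m s\<bar>)"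
  define C2 where "C2 = (\<Sum>s\<in>UNIV. \<bar>adv r mu i m s\<bar>)"
  define F where "F d = MVJ A P r \<beta> (mu(i := mixp d (mu i) m))" for d
  have F0: "F 0 = MVJ A P r \<beta> mu" by (simp add: F_def)
  have bnd: "\<bar>(F d - F 0) / d - X0\<bar> \<le> (C1 + \<bar>\<beta>\<bar> * C2\<^sup>2) * d" if d: "0 < d" "d \<le> 1" for d
  proof -
    define nu where "nu = mu(i := mixp d (mu i) m)"
    have nu: "is_joint_policy A nu" unfolding nu_def
      by (rule jpol_upd[OF mu policy_mixp]) (use mu m d in \<open>auto simp: is_joint_policy_def\<close>)
    define X where "X = (\<Sum>s\<in>UNIV. stat_dist A P nu s * adv w mu i m s)"
    define Y where "Y = (\<Sum>s\<in>UNIV. stat_dist A P nu s * adv r mu i m s)"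
    have "F d - F 0 = d * X + \<beta> * (d * Y)\<^sup>2"
      unfolding F0 unfolding F_def X_def Y_def nu_def w_def by (rule J_diff[OF mu m]) (use d in auto)
    then have q: "(F d - F 0) / d = X + \<beta> * d * Y\<^sup>2"
      using d by (simp add: field_simps power2_eq_square)
    have "\<bar>X - X0\<bar> \<le> d * C1"
      unfolding X_def X0_def C1_def nu_def by (rule sd_cont[OF mu m]) (use d in auto)
    moreover have "\<bar>Y\<bar> \<le> C2" unfolding Y_def C2_def by (rule sum_sd_bound[OF nu])
    then have "\<bar>Y\<bar>\<^sup>2 \<le> C2\<^sup>2" by (intro power_mono) auto
    then have "Y\<^sup>2 \<le> C2\<^sup>2" by simp
    then have "\<bar>\<beta> * d * Y\<^sup>2\<bar> \<le> \<bar>\<beta>\<bar> * d * C2\<^sup>2"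
      using d by (simp add: abs_mult mult_left_mono)
    ultimately show ?thesis unfolding q by (simp add: algebra_simps)
  qed
  have "((\<lambda>d. (F d - F 0) / d) \<longlongrightarrow> X0) (at_right 0)"
    by (rule tendsto_right0_bound) (use bnd in auto)
  then have "Lim (at_right 0) (\<lambda>d. (F d - F 0) / d) = X0" by (rule tendsto_Lim[rotated]) simp
  then show ?thesis unfolding Dir_def rderiv0_def F_def X0_def by simp
qed

end


lemma min_db:
  assumes "\<forall>i::'i::finite. \<exists>db. 0 < db \<and> db \<le> 1 \<and> (\<forall>d. 0 < d \<and> d \<le> db \<longrightarrow> R i d)"
  shows "\<exists>db. 0 < db \<and> db \<le> (1::real) \<and> (\<forall>d. 0 < d \<and> d \<le> db \<longrightarrow> (\<forall>i. R i d))"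
proof -
  obtain f where f: "\<And>i. 0 < f i \<and> f i \<le> 1 \<and> (\<forall>d. 0 < d \<and> d \<le> f i \<longrightarrow> R i d)"
    using assms by metis
  define db where "db = Min (range f)"
  have "db \<in> range f" unfolding db_def by (rule Min_in) auto
  then obtain i0 where i0: "db = f i0" by blast
  have le: "db \<le> f i" for i unfolding db_def by (rule Min_le) auto
  show ?thesis
  proof (intro exI conjI allI impI)
    show "0 < db" "db \<le> 1" using f[of i0] i0 by auto
  next
    fix d i assume "0 < d \<and> d \<le> db"
    then show "R i d" using f[of i] le[of i] by auto
  qed
qed

context game
begin

definition ms :: "('i \<Rightarrow> 's \<Rightarrow> 'a \<Rightarrow> real) \<Rightarrow> 'i \<Rightarrow> 's \<Rightarrow> 'a \<Rightarrow> 's \<Rightarrow> 'a \<Rightarrow> real" where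
  "ms mu i s0 k = (\<lambda>s a. if s = s0 then dk k s a else mu i s a)"

lemma ms_policy:
  assumes mu: "is_joint_policy A mu" and k: "k \<in> A i"
  shows "is_policy (A i) (ms mu i s0 k)"
proof -
  have pi: "is_policy (A i) (mu i)" using mu by (simp add: is_joint_policy_def)
  have "(\<Sum>a\<in>A i. (if a = k then 1 else 0::real)) = 1" using k by simp
  moreover have "(\<Sum>a\<in>A i. ms mu i s0 k s a) = 1" for s
  proof (cases "s = s0")
    case True then show ?thesis using k by (simp add: ms_def dk_def)
  next
    case False then show ?thesis using pi by (simp add: ms_def is_policy_def)
  qed
  ultimately show ?thesis using pi k unfolding is_policy_def ms_def dk_def by auto
qed

lemma adv_ms:
  assumes mu: "is_joint_policy A mu"
  shows "adv f mu i (ms mu i s0 k) s = (if s = s0 then adv f mu i (dk k) s0 else 0)"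
proof (cases "s = s0")
  case True
  have "ms mu i s0 k s = dk k s" using True by (simp add: ms_def)
  then show ?thesis using adv_local[of "ms mu i s0 k" s "dk k" f mu i] True by simp
next
  case False
  have "ms mu i s0 k s = mu i s" using False by (simp add: ms_def)
  then show ?thesis using adv_local[of "ms mu i s0 k" s "mu i" f mu i] adv_self[OF mu] False by simp
qed

lemma sum_adv_ms:
  assumes mu: "is_joint_policy A mu"
  shows "(\<Sum>s\<in>UNIV. pp s * adv f mu i (ms mu i s0 k) s) = pp s0 * adv f mu i (dk k) s0"
proof -
  have "(\<Sum>s\<in>UNIV. pp s * adv f mu i (ms mu i s0 k) s) = (\<Sum>s\<in>UNIV. if s = s0 then pp s0 * adv f mu i (dk k) s0 else 0)"
    by (rule sum.cong) (auto simp: adv_ms[OF mu])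
  then show ?thesis by simp
qed

lemma ms_self: "ms mu i s0 k = mu i \<Longrightarrow> adv f mu i (dk k) s0 = 0" if "is_joint_policy A mu"
proof -
  assume e: "ms mu i s0 k = mu i"
  have "adv f mu i (dk k) s0 = adv f mu i (ms mu i s0 k) s0" using adv_ms[OF that, of f i s0 k s0] by simp
  also have "\<dots> = 0" unfolding e by (rule adv_self[OF that])
  finally show ?thesis .
qed

end


lemma final_ineq:
  fixes d Xn Y K M db \<beta> :: real
  assumes "0 < d" "d \<le> db" "db = 1 / (1 + \<beta> * K\<^sup>2 * M)" "0 \<le> \<beta>" "0 \<le> M" "0 \<le> Xn" "Xn \<le> M"
    "\<bar>Y\<bar> \<le> K * Xn"
  shows "d * (- Xn) + \<beta> * (d * Y)\<^sup>2 \<le> 0" and "0 < Xn \<Longrightarrow> d * (- Xn) + \<beta> * (d * Y)\<^sup>2 < 0"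
proof -
  have Kx: "0 \<le> K * Xn" using assms(8) by linarith
  have "\<bar>Y\<bar>\<^sup>2 \<le> (K * Xn)\<^sup>2" by (intro power_mono) (use assms(8) in auto)
  then have Y2: "Y\<^sup>2 \<le> K\<^sup>2 * Xn\<^sup>2" by (simp add: power_mult_distrib)
  have D: "0 < 1 + \<beta> * K\<^sup>2 * M" using assms(4,5) by (simp add: add_pos_nonneg)
  have "\<beta> * K\<^sup>2 * Xn \<le> \<beta> * K\<^sup>2 * M" using assms(4,7) by (simp add: mult_left_mono)
  then have "d * (\<beta> * K\<^sup>2 * Xn) \<le> db * (\<beta> * K\<^sup>2 * M)"
    using assms(1,2,4,6) by (rule_tac mult_mono) auto
  also have "db * (\<beta> * K\<^sup>2 * M) = (\<beta> * K\<^sup>2 * M) / (1 + \<beta> * K\<^sup>2 * M)" using assms(3) by simp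
  also have "\<dots> < 1" using D by (simp add: divide_less_eq)
  finally have lt: "d * \<beta> * K\<^sup>2 * Xn < 1" by (simp add: mult.assoc)
  have "\<beta> * (d * Y)\<^sup>2 = d * (d * \<beta> * Y\<^sup>2)" by (simp add: power2_eq_square algebra_simps)
  also have "\<dots> \<le> d * (d * \<beta> * (K\<^sup>2 * Xn\<^sup>2))"
    using assms(1,4) Y2 by (intro mult_left_mono) auto
  finally have le1: "d * (- Xn) + \<beta> * (d * Y)\<^sup>2 \<le> d * Xn * (d * \<beta> * K\<^sup>2 * Xn - 1)"
    by (simp add: power2_eq_square algebra_simps)
  moreover have "d * Xn * (d * \<beta> * K\<^sup>2 * Xn - 1) \<le> 0"
    using lt assms(1,6) by (intro mult_nonneg_nonpos) auto
  ultimately show "d * (- Xn) + \<beta> * (d * Y)\<^sup>2 \<le> 0" by linarith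
  assume "0 < Xn"
  then have "d * Xn * (d * \<beta> * K\<^sup>2 * Xn - 1) < 0"
    using lt assms(1) by (intro mult_pos_neg) auto
  with le1 show "d * (- Xn) + \<beta> * (d * Y)\<^sup>2 < 0" by linarith
qed

context game
begin

lemma uniform:
  fixes r :: "'s \<Rightarrow> ('i \<Rightarrow> 'a) \<Rightarrow> real" and \<beta> :: real
  assumes mu: "is_joint_policy A mu" and beta: "0 \<le> \<beta>"
  defines "w \<equiv> (\<lambda>s a. r s a - \<beta> * (r s a - eta A P r mu)\<^sup>2)"
  assumes anp: "\<forall>s k. k \<in> A i \<longrightarrow> adv w mu i (dk k) s \<le> 0"
    and zb: "\<forall>s k. k \<in> A i \<longrightarrow> adv w mu i (dk k) s = 0 \<longrightarrow> adv r mu i (dk k) s = 0"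
  shows "\<exists>db. 0 < db \<and> db \<le> 1 \<and> (\<forall>d. 0 < d \<and> d \<le> db \<longrightarrow> (\<forall>m. is_policy (A i) m \<longrightarrow>
        MVJ A P r \<beta> (mu(i := mixp d (mu i) m)) \<le> MVJ A P r \<beta> mu \<and>
        ((\<exists>s. adv w mu i m s \<noteq> 0) \<longrightarrow> MVJ A P r \<beta> (mu(i := mixp d (mu i) m)) < MVJ A P r \<beta> mu)))"
proof -
  define al where "al s k = adv w mu i (dk k) s" for s k
  define be where "be s k = adv r mu i (dk k) s" for s k
  define K where "K = (\<Sum>s\<in>UNIV. \<Sum>k\<in>A i. \<bar>be s k\<bar> / (- al s k))"
  define M where "M = (\<Sum>s\<in>UNIV. \<Sum>k\<in>A i. - al s k)"
  have alnp: "k \<in> A i \<Longrightarrow> al s k \<le> 0" for s k using anp by (simp add: al_def)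
  have tnn: "0 \<le> \<bar>be s k\<bar> / (- al s k)" if "k \<in> A i" for s k
    using alnp[OF that] by (intro divide_nonneg_nonneg) auto
  have K0: "0 \<le> K" unfolding K_def by (intro sum_nonneg) (use tnn in auto)
  have M0: "0 \<le> M" unfolding M_def by (intro sum_nonneg) (use alnp in \<open>auto simp: \<close>)
  have hK: "\<bar>be s k\<bar> \<le> K * (- al s k)" if k: "k \<in> A i" for s k
  proof (cases "al s k = 0")
    case True
    then have "be s k = 0" using zb k by (simp add: al_def be_def)
    then show ?thesis using True by simp
  next
    case False
    moreover have "al s k \<le> 0" using alnp k by blast
    ultimately have neg: "0 < - al s k" by linarith
    have Sn: "0 \<le> (\<Sum>k\<in>A i. \<bar>be s k\<bar> / (- al s k))" for s by (rule sum_nonneg) (rule tnn)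
    have "\<bar>be s k\<bar> / (- al s k) \<le> (\<Sum>k\<in>A i. \<bar>be s k\<bar> / (- al s k))"
      by (rule member_le_sum) (use k tnn in auto)
    also have "\<dots> \<le> K" unfolding K_def
      by (rule member_le_sum[of s UNIV "\<lambda>s. \<Sum>k\<in>A i. \<bar>be s k\<bar> / (- al s k)"]) (use Sn in auto)
    finally have "\<bar>be s k\<bar> / (- al s k) \<le> K" .
    then have "\<bar>be s k\<bar> / (- al s k) * (- al s k) \<le> K * (- al s k)"
      using neg by (intro mult_right_mono) auto
    then show ?thesis using neg by simp
  qed
  define db where "db = 1 / (1 + \<beta> * K\<^sup>2 * M)"
  have D: "1 \<le> 1 + \<beta> * K\<^sup>2 * M" using beta M0 by simp
  have db: "0 < db" "db \<le> 1" unfolding db_def using D by (auto simp: field_simps)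
  show ?thesis
  proof (rule exI[of _ db], rule conjI[OF db(1) conjI[OF db(2)]], intro allI impI)
    fix d :: real and m :: "'s \<Rightarrow> 'a \<Rightarrow> real"
    assume d: "0 < d \<and> d \<le> db" and m: "is_policy (A i) m"
    have d1: "0 \<le> d" "d \<le> 1" using d db by auto
    define nu where "nu = mu(i := mixp d (mu i) m)"
    have nu: "is_joint_policy A nu" unfolding nu_def
      by (rule jpol_upd[OF mu policy_mixp]) (use mu m d1 in \<open>auto simp: is_joint_policy_def\<close>)
    define pp where "pp s = stat_dist A P nu s" for s
    have pp: "0 < pp s" "pp s \<le> 1" for s unfolding pp_def using sd_pos[OF nu] sd_le1[OF nu] by auto
    have mnn: "0 \<le> m s k" for s k using m by (simp add: is_policy_def)
    have mle: "m s k \<le> 1" if "k \<in> A i" for s k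
    proof -
      have "m s k \<le> (\<Sum>k\<in>A i. m s k)" by (rule member_le_sum) (use that mnn in auto)
      then show ?thesis using m by (simp add: is_policy_def)
    qed
    define a where "a s = adv w mu i m s" for s
    define b where "b s = adv r mu i m s" for s
    have a_eq: "a s = (\<Sum>k\<in>A i. m s k * al s k)" for s unfolding a_def al_def by (rule adv_lin[OF m])
    have b_eq: "b s = (\<Sum>k\<in>A i. m s k * be s k)" for s unfolding b_def be_def by (rule adv_lin[OF m])
    have anp2: "0 \<le> - a s" for s unfolding a_eq
      using mnn alnp by (simp add: sum_negf[symmetric]) (intro sum_nonneg, simp add: mult_nonneg_nonpos)
    have ab: "\<bar>b s\<bar> \<le> K * (- a s)" for s
    proof -
      have "\<bar>b s\<bar> \<le> (\<Sum>k\<in>A i. \<bar>m s k * be s k\<bar>)" unfolding b_eq by (rule sum_abs)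
      also have "\<dots> \<le> (\<Sum>k\<in>A i. m s k * (K * (- al s k)))"
      proof (rule sum_mono)
        fix k assume k: "k \<in> A i"
        have "\<bar>m s k * be s k\<bar> = m s k * \<bar>be s k\<bar>" using mnn[of s k] by (simp add: abs_mult)
        also have "\<dots> \<le> m s k * (K * (- al s k))" by (rule mult_left_mono[OF hK[OF k] mnn])
        finally show "\<bar>m s k * be s k\<bar> \<le> m s k * (K * (- al s k))" .
      qed
      also have "\<dots> = K * (- a s)" unfolding a_eq
        by (simp add: sum_distrib_left sum_negf[symmetric] algebra_simps)
      finally show ?thesis .
    qed
    have aM: "- a s \<le> (\<Sum>k\<in>A i. - al s k)" for s
    proof -
      have "- a s = (\<Sum>k\<in>A i. m s k * (- al s k))" unfolding a_eq by (simp add: sum_negf[symmetric])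
      also have "\<dots> \<le> (\<Sum>k\<in>A i. - al s k)"
      proof (rule sum_mono)
        fix k assume k: "k \<in> A i"
        show "m s k * (- al s k) \<le> - al s k"
          by (rule mult_left_le_one_le) (use mle[OF k] mnn[of s k] alnp[OF k] in auto)
      qed
      finally show ?thesis .
    qed
    define Xn where "Xn = (\<Sum>s\<in>UNIV. pp s * (- a s))"
    define Y where "Y = (\<Sum>s\<in>UNIV. pp s * b s)"
    have Xn0: "0 \<le> Xn" unfolding Xn_def
      by (intro sum_nonneg mult_nonneg_nonneg) (use pp anp2 in \<open>auto intro: less_imp_le\<close>)
    have XnM: "Xn \<le> M"
    proof -
      have "Xn \<le> (\<Sum>s\<in>UNIV. - a s)" unfolding Xn_def
      proof (rule sum_mono)
        fix s show "pp s * (- a s) \<le> - a s"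
          by (rule mult_left_le_one_le) (use pp(1)[of s] pp(2)[of s] anp2[of s] in auto)
      qed
      also have "\<dots> \<le> M" unfolding M_def by (rule sum_mono) (rule aM)
      finally show ?thesis .
    qed
    have YK: "\<bar>Y\<bar> \<le> K * Xn"
    proof -
      have "\<bar>Y\<bar> \<le> (\<Sum>s\<in>UNIV. \<bar>pp s * b s\<bar>)" unfolding Y_def by (rule sum_abs)
      also have "\<dots> \<le> (\<Sum>s\<in>UNIV. pp s * (K * (- a s)))"
      proof (rule sum_mono)
        fix s
        have "\<bar>pp s * b s\<bar> = pp s * \<bar>b s\<bar>" using pp(1)[of s] by (simp add: abs_mult)
        also have "\<dots> \<le> pp s * (K * (- a s))" by (rule mult_left_mono[OF ab]) (use pp(1)[of s] in auto)
        finally show "\<bar>pp s * b s\<bar> \<le> pp s * (K * (- a s))" .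
      qed
      also have "\<dots> = K * Xn" unfolding Xn_def by (simp add: sum_distrib_left algebra_simps)
      finally show ?thesis .
    qed
    have diff: "MVJ A P r \<beta> nu - MVJ A P r \<beta> mu = d * (- Xn) + \<beta> * (d * Y)\<^sup>2"
    proof -
      have "MVJ A P r \<beta> nu - MVJ A P r \<beta> mu = d * (\<Sum>s\<in>UNIV. pp s * a s) + \<beta> * (d * Y)\<^sup>2"
        unfolding nu_def pp_def a_def Y_def b_def w_def by (rule J_diff[OF mu m d1])
      moreover have "(\<Sum>s\<in>UNIV. pp s * a s) = - Xn" unfolding Xn_def by (simp add: sum_negf[symmetric])
      ultimately show ?thesis by simp
    qed
    have fi: "d * (- Xn) + \<beta> * (d * Y)\<^sup>2 \<le> 0" "0 < Xn \<Longrightarrow> d * (- Xn) + \<beta> * (d * Y)\<^sup>2 < 0"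
      using final_ineq[of d db \<beta> K M Xn Y] d db_def beta M0 Xn0 XnM YK by auto
    show "MVJ A P r \<beta> (mu(i := mixp d (mu i) m)) \<le> MVJ A P r \<beta> mu \<and>
        ((\<exists>s. adv w mu i m s \<noteq> 0) \<longrightarrow> MVJ A P r \<beta> (mu(i := mixp d (mu i) m)) < MVJ A P r \<beta> mu)"
    proof (intro conjI impI)
      show "MVJ A P r \<beta> (mu(i := mixp d (mu i) m)) \<le> MVJ A P r \<beta> mu"
        using diff fi(1) unfolding nu_def by linarith
    next
      assume "\<exists>s. adv w mu i m s \<noteq> 0"
      then obtain s0 where s0: "a s0 \<noteq> 0" unfolding a_def by blast
      have "0 < - a s0" using anp2[of s0] s0 by linarith
      then have t1: "0 < pp s0 * - a s0" using pp(1)[of s0] by (rule mult_pos_pos[rotated])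
      have t2: "0 \<le> pp s * - a s" for s by (rule mult_nonneg_nonneg) (use pp(1)[of s] anp2[of s] in auto)
      have "0 < Xn" unfolding Xn_def using sum_pos2[OF finite UNIV_I, of "\<lambda>s. pp s * - a s", OF t1] t2 by blast
      then show "MVJ A P r \<beta> (mu(i := mixp d (mu i) m)) < MVJ A P r \<beta> mu"
        using diff fi(2) unfolding nu_def by linarith
    qed
  qed
qed

end

theorem theorem3:
  fixes A :: "'i::finite \<Rightarrow> 'a::finite set"
    and P :: "'s::finite \<Rightarrow> ('i \<Rightarrow> 'a) \<Rightarrow> 's \<Rightarrow> real"
    and r :: "'s \<Rightarrow> ('i \<Rightarrow> 'a) \<Rightarrow> real"
    and \<beta> :: real
    and mu :: "'i \<Rightarrow> 's \<Rightarrow> 'a \<Rightarrow> real"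
  assumes A_ne: "\<forall>i. A i \<noteq> {}"
    and P_nonneg: "\<forall>s a s'. a \<in> joint_acts A \<longrightarrow> 0 \<le> P s a s'"
    and P_sum: "\<forall>s a. a \<in> joint_acts A \<longrightarrow> (\<Sum>s'\<in>UNIV. P s a s') = 1"
    and erg: "\<forall>nu. is_joint_policy A nu \<longrightarrow> ergodic (chain A P nu)"
    and beta: "0 \<le> \<beta>"
    and pol: "is_joint_policy A mu"
    and fos: "first_order_stationary A P r \<beta> mu"
  shows "((\<forall>i m. is_policy (A i) m \<and> m \<noteq> mu i \<longrightarrow> Dir A P r \<beta> mu i m < 0)
            \<longrightarrow> strict_local_NE A P r \<beta> mu)
       \<and> ((\<exists>i m. is_policy (A i) m \<and> m \<noteq> mu i \<and> Dir A P r \<beta> mu i m = 0)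
            \<longrightarrow> (local_NE A P r \<beta> mu \<longleftrightarrow>
                 (\<forall>i m. is_policy (A i) m \<and> m \<noteq> mu i \<and> Dir A P r \<beta> mu i m = 0 \<longrightarrow>
                    (\<exists>db. 0 < db \<and> db \<le> 1 \<and> (\<forall>d. 0 < d \<and> d \<le> db \<longrightarrow>
                       eta A P r (mu(i := mixp d (mu i) m)) = eta A P r mu)))))"
proof -
  interpret G: game A P using P_nonneg P_sum erg by unfold_locales
  define w where "w = (\<lambda>s a. r s a - \<beta> * (r s a - eta A P r mu)\<^sup>2)"
  have Dv: "Dir A P r \<beta> mu i m = (\<Sum>s\<in>UNIV. stat_dist A P mu s * G.adv w mu i m s)"
    if "is_policy (A i) m" for i m
    unfolding w_def by (rule G.Dir_val[OF pol that])
  have pi0: "0 < stat_dist A P mu s" for s by (rule G.sd_pos[OF pol])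
  have msp: "is_policy (A i) (G.ms mu i s k)" if "k \<in> A i" for i s k by (rule G.ms_policy[OF pol that])
  have Dms: "Dir A P r \<beta> mu i (G.ms mu i s k) = stat_dist A P mu s * G.adv w mu i (G.dk k) s"
    if "k \<in> A i" for i s k
    unfolding Dv[OF msp[OF that]] by (rule G.sum_adv_ms[OF pol])
  have anp: "\<forall>s k. k \<in> A i \<longrightarrow> G.adv w mu i (G.dk k) s \<le> 0" for i
  proof (intro allI impI)
    fix s k assume k: "k \<in> A i"
    have "Dir A P r \<beta> mu i (G.ms mu i s k) \<le> 0"
      using fos msp[OF k] unfolding first_order_stationary_def by blast
    then have "stat_dist A P mu s * G.adv w mu i (G.dk k) s \<le> 0" using Dms[OF k] by simp
    then show "G.adv w mu i (G.dk k) s \<le> 0" using pi0[of s] by (simp add: mult_le_0_iff)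
  qed
  have advnp: "G.adv w mu i m s \<le> 0" if m: "is_policy (A i) m" for i m s
  proof -
    have mnn: "0 \<le> m s k" for k using m by (simp add: is_policy_def)
    have "G.adv w mu i m s = (\<Sum>k\<in>A i. m s k * G.adv w mu i (G.dk k) s)" by (rule G.adv_lin[OF m])
    also have "\<dots> \<le> 0" by (rule sum_nonpos) (use mnn anp in \<open>auto intro: mult_nonneg_nonpos\<close>)
    finally show ?thesis .
  qed
  have D0: "\<forall>s. G.adv w mu i m s = 0" if m: "is_policy (A i) m" and z: "Dir A P r \<beta> mu i m = 0" for i m
  proof
    fix s
    have t: "0 \<le> - (stat_dist A P mu s * G.adv w mu i m s)" for s
      using advnp[OF m, of s] pi0[of s] by (simp add: mult_le_0_iff)
    have "(\<Sum>s\<in>UNIV. - (stat_dist A P mu s * G.adv w mu i m s)) = 0"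
      using z Dv[OF m] by (simp add: sum_negf)
    then have "\<forall>s. - (stat_dist A P mu s * G.adv w mu i m s) = 0"
      using sum_nonneg_eq_0_iff[of UNIV "\<lambda>s. - (stat_dist A P mu s * G.adv w mu i m s)"] t by simp
    then have "stat_dist A P mu s * G.adv w mu i m s = 0" by simp
    then show "G.adv w mu i m s = 0" using pi0[of s] by simp
  qed
  have Dneg: "\<exists>s. G.adv w mu i m s \<noteq> 0" if m: "is_policy (A i) m" and n: "Dir A P r \<beta> mu i m < 0" for i m
  proof (rule ccontr)
    assume "\<not> ?thesis"
    then have "Dir A P r \<beta> mu i m = 0" using Dv[OF m] by simp
    then show False using n by simp
  qed
  have unif: "\<exists>db. 0 < db \<and> db \<le> 1 \<and> (\<forall>d. 0 < d \<and> d \<le> db \<longrightarrow> (\<forall>i. \<forall>m. is_policy (A i) m \<longrightarrow>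
        MVJ A P r \<beta> (mu(i := mixp d (mu i) m)) \<le> MVJ A P r \<beta> mu \<and>
        ((\<exists>s. G.adv w mu i m s \<noteq> 0) \<longrightarrow> MVJ A P r \<beta> (mu(i := mixp d (mu i) m)) < MVJ A P r \<beta> mu)))"
    if zb: "\<And>i. \<forall>s k. k \<in> A i \<longrightarrow> G.adv w mu i (G.dk k) s = 0 \<longrightarrow> G.adv r mu i (G.dk k) s = 0"
  proof (rule min_db, rule allI)
    fix i
    show "\<exists>db. 0 < db \<and> db \<le> 1 \<and> (\<forall>d. 0 < d \<and> d \<le> db \<longrightarrow> (\<forall>m. is_policy (A i) m \<longrightarrow>
        MVJ A P r \<beta> (mu(i := mixp d (mu i) m)) \<le> MVJ A P r \<beta> mu \<and>
        ((\<exists>s. G.adv w mu i m s \<noteq> 0) \<longrightarrow> MVJ A P r \<beta> (mu(i := mixp d (mu i) m)) < MVJ A P r \<beta> mu)))"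
      using G.uniform[OF pol beta, where r=r and i=i] anp[of i] zb[of i] unfolding w_def by blast
  qed
  show ?thesis
  proof (intro conjI impI)
    assume H1: "\<forall>i m. is_policy (A i) m \<and> m \<noteq> mu i \<longrightarrow> Dir A P r \<beta> mu i m < 0"
    have zb: "\<forall>s k. k \<in> A i \<longrightarrow> G.adv w mu i (G.dk k) s = 0 \<longrightarrow> G.adv r mu i (G.dk k) s = 0" for i
    proof (intro allI impI)
      fix s :: 's and k :: 'a assume k: "k \<in> A i" and z: "G.adv w mu i (G.dk k) s = 0"
      have "Dir A P r \<beta> mu i (G.ms mu i s k) = 0" using Dms[OF k] z by simp
      then have "G.ms mu i s k = mu i" using H1 msp[OF k] by force
      then show "G.adv r mu i (G.dk k) s = 0" by (rule G.ms_self[OF pol])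
    qed
    obtain db where db: "0 < db" "db \<le> 1" and R: "\<forall>d. 0 < d \<and> d \<le> db \<longrightarrow> (\<forall>i. \<forall>m. is_policy (A i) m \<longrightarrow>
        MVJ A P r \<beta> (mu(i := mixp d (mu i) m)) \<le> MVJ A P r \<beta> mu \<and>
        ((\<exists>s. G.adv w mu i m s \<noteq> 0) \<longrightarrow> MVJ A P r \<beta> (mu(i := mixp d (mu i) m)) < MVJ A P r \<beta> mu))"
      using unif[OF zb] by blast
    show "strict_local_NE A P r \<beta> mu"
      unfolding strict_local_NE_def
    proof (rule exI[of _ db], intro conjI db allI impI)
      fix d :: real and i :: 'i and m :: "'s \<Rightarrow> 'a \<Rightarrow> real" assume d: "0 < d \<and> d \<le> db" and m: "is_policy (A i) m"
      show "MVJ A P r \<beta> (mu(i := mixp d (mu i) m)) \<le> MVJ A P r \<beta> mu" using R d m by blast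
      assume "m \<noteq> mu i"
      then have "\<exists>s. G.adv w mu i m s \<noteq> 0" using H1 m Dneg by blast
      then show "MVJ A P r \<beta> (mu(i := mixp d (mu i) m)) < MVJ A P r \<beta> mu" using R d m by blast
    qed
  next
    assume "\<exists>i m. is_policy (A i) m \<and> m \<noteq> mu i \<and> Dir A P r \<beta> mu i m = 0"
    show "local_NE A P r \<beta> mu \<longleftrightarrow>
          (\<forall>i m. is_policy (A i) m \<and> m \<noteq> mu i \<and> Dir A P r \<beta> mu i m = 0 \<longrightarrow>
             (\<exists>db. 0 < db \<and> db \<le> 1 \<and> (\<forall>d. 0 < d \<and> d \<le> db \<longrightarrow>
                eta A P r (mu(i := mixp d (mu i) m)) = eta A P r mu)))"
    proof
      assume "local_NE A P r \<beta> mu"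
      then obtain db where db: "0 < db" "db \<le> 1" and L: "\<forall>d. 0 < d \<and> d \<le> db \<longrightarrow> (\<forall>i m. is_policy (A i) m \<longrightarrow>
        MVJ A P r \<beta> mu \<ge> MVJ A P r \<beta> (mu(i := mixp d (mu i) m)))"
        unfolding local_NE_def by blast
      show "\<forall>i m. is_policy (A i) m \<and> m \<noteq> mu i \<and> Dir A P r \<beta> mu i m = 0 \<longrightarrow>
             (\<exists>db. 0 < db \<and> db \<le> 1 \<and> (\<forall>d. 0 < d \<and> d \<le> db \<longrightarrow>
                eta A P r (mu(i := mixp d (mu i) m)) = eta A P r mu))"
      proof (intro allI impI)
        fix i :: 'i and m :: "'s \<Rightarrow> 'a \<Rightarrow> real" assume H: "is_policy (A i) m \<and> m \<noteq> mu i \<and> Dir A P r \<beta> mu i m = 0"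
        then have m: "is_policy (A i) m" by blast
        have a0: "\<forall>s. G.adv w mu i m s = 0" using D0 H by blast
        show "\<exists>db. 0 < db \<and> db \<le> 1 \<and> (\<forall>d. 0 < d \<and> d \<le> db \<longrightarrow>
                eta A P r (mu(i := mixp d (mu i) m)) = eta A P r mu)"
        proof (rule exI[of _ db], intro conjI db allI impI)
          fix d assume d: "0 < d \<and> d \<le> db"
          then have d1: "0 \<le> d" "d \<le> 1" using db by auto
          define Y where "Y = (\<Sum>s\<in>UNIV. stat_dist A P (mu(i := mixp d (mu i) m)) s * G.adv r mu i m s)"
          have jd: "MVJ A P r \<beta> (mu(i := mixp d (mu i) m)) - MVJ A P r \<beta> mu = \<beta> * (d * Y)\<^sup>2"
            using G.J_diff[OF pol m d1, of r \<beta>] a0 unfolding Y_def w_def by simp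
          have le: "\<beta> * (d * Y)\<^sup>2 \<le> 0" using L d m jd by force
          have eY: "eta A P r (mu(i := mixp d (mu i) m)) - eta A P r mu = d * Y"
            unfolding G.eta_etaf Y_def by (rule G.pd[OF pol m d1])
          have "d * Y = 0"
          proof (cases "\<beta> = 0")
            case True
            then have "w = r" unfolding w_def by simp
            then have "Y = 0" unfolding Y_def using a0 by simp
            then show ?thesis by simp
          next
            case False
            then have "0 < \<beta>" using beta by simp
            then have "(d * Y)\<^sup>2 \<le> 0" using le by (simp add: mult_le_0_iff)
            then show ?thesis by simp
          qed
          then show "eta A P r (mu(i := mixp d (mu i) m)) = eta A P r mu" using eY by linarith
        qed
      qed
    next
      assume H2: "\<forall>i m. is_policy (A i) m \<and> m \<noteq> mu i \<and> Dir A P r \<beta> mu i m = 0 \<longrightarrow>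
             (\<exists>db. 0 < db \<and> db \<le> 1 \<and> (\<forall>d. 0 < d \<and> d \<le> db \<longrightarrow>
                eta A P r (mu(i := mixp d (mu i) m)) = eta A P r mu))"
      have zb: "\<forall>s k. k \<in> A i \<longrightarrow> G.adv w mu i (G.dk k) s = 0 \<longrightarrow> G.adv r mu i (G.dk k) s = 0" for i
      proof (intro allI impI)
        fix s :: 's and k :: 'a assume k: "k \<in> A i" and z: "G.adv w mu i (G.dk k) s = 0"
        show "G.adv r mu i (G.dk k) s = 0"
        proof (cases "G.ms mu i s k = mu i")
          case True then show ?thesis by (rule G.ms_self[OF pol])
        next
          case False
          have "Dir A P r \<beta> mu i (G.ms mu i s k) = 0" using Dms[OF k] z by simp
          then obtain db where db: "0 < db" "db \<le> 1" and E: "\<forall>d. 0 < d \<and> d \<le> db \<longrightarrow>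
                eta A P r (mu(i := mixp d (mu i) (G.ms mu i s k))) = eta A P r mu"
            using H2 msp[OF k] False by blast
          have "eta A P r (mu(i := mixp db (mu i) (G.ms mu i s k))) - eta A P r mu
              = db * (\<Sum>s'\<in>UNIV. stat_dist A P (mu(i := mixp db (mu i) (G.ms mu i s k))) s' * G.adv r mu i (G.ms mu i s k) s')"
            unfolding G.eta_etaf by (rule G.pd[OF pol msp[OF k]]) (use db in auto)
          also have "\<dots> = db * (stat_dist A P (mu(i := mixp db (mu i) (G.ms mu i s k))) s * G.adv r mu i (G.dk k) s)"
            by (simp add: G.sum_adv_ms[OF pol])
          finally have "db * (stat_dist A P (mu(i := mixp db (mu i) (G.ms mu i s k))) s * G.adv r mu i (G.dk k) s) = 0"
            using E db by simp
          moreover have "0 < stat_dist A P (mu(i := mixp db (mu i) (G.ms mu i s k))) s"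
            by (rule G.sd_pos, rule jpol_upd[OF pol policy_mixp]) (use pol msp[OF k] db in \<open>auto simp: is_joint_policy_def\<close>)
          ultimately show ?thesis using db by simp
        qed
      qed
      obtain db where db: "0 < db" "db \<le> 1" and R: "\<forall>d. 0 < d \<and> d \<le> db \<longrightarrow> (\<forall>i. \<forall>m. is_policy (A i) m \<longrightarrow>
          MVJ A P r \<beta> (mu(i := mixp d (mu i) m)) \<le> MVJ A P r \<beta> mu \<and>
          ((\<exists>s. G.adv w mu i m s \<noteq> 0) \<longrightarrow> MVJ A P r \<beta> (mu(i := mixp d (mu i) m)) < MVJ A P r \<beta> mu))"
        using unif[OF zb] by blast
      show "local_NE A P r \<beta> mu" unfolding local_NE_def
        using db R by blast
    qed
  qed
qed

end
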